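(* Let $m>\frac12$, $\beta\in(0,1)$. There exists a constant $C_H=C_H(m,\beta)<\infty$ such that for all $0<\varepsilon\le\frac12$, all $s_1,s_2\in[0,1]$ and all $f,g\in C^\infty(\mathbb R/\mathbb Z,\mathbb R)$, $$\|H^\varepsilon_{s_1,s_2,\beta}(f,g)\|_{H^m}\le C_H\|f\|_{H^{m+\beta}}\|g\|_{H^{m+\beta}}.$$
   Context: $H^\varepsilon_{s_1,s_2,\beta}(f,g)(x)=\int_{|w|\in[\varepsilon,\frac12]}\frac{f(x+s_1w)g(x+s_2w)}{w|w|^\beta}\,\mathrm dw$ for $x\in\mathbb R/\mathbb Z$. For $s\ge0$, $\|f\|_{H^s}^2=\sum_{k\in\mathbb Z}(1+k^2)^s|\hat f(k)|^2$ with $\hat f(k)=\int_0^1f(x)e^{-2\pi ikx}\,\mathrm dx$. *)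

theory Defs
  imports "HOL-Analysis.Analysis"
begin

text \<open>Functions on R/Z are represented as 1-periodic functions real => real.\<close>

definition periodic1 :: "(real \<Rightarrow> real) \<Rightarrow> bool" where
  "periodic1 f \<longleftrightarrow> (\<forall>x. f (x + 1) = f x)"

definition smooth_fun :: "(real \<Rightarrow> real) \<Rightarrow> bool" where
  "smooth_fun f \<longleftrightarrow> (\<forall>n x. ((deriv ^^ n) f) differentiable (at x))"

definition fourier_coeff :: "(real \<Rightarrow> real) \<Rightarrow> int \<Rightarrow> complex" where
  "fourier_coeff f k =
     integral {0..1} (\<lambda>x. complex_of_real (f x) * exp (- 2 * pi * \<i> * of_int k * of_real x))"

definition sobolev_norm :: "real \<Rightarrow> (real \<Rightarrow> real) \<Rightarrow> real" where
  "sobolev_norm s f =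
     sqrt (\<Sum>\<^sub>\<infinity>k\<in>(UNIV::int set). (1 + (real_of_int k)\<^sup>2) powr s * (cmod (fourier_coeff f k))\<^sup>2)"

definition Hop :: "real \<Rightarrow> real \<Rightarrow> real \<Rightarrow> real \<Rightarrow> (real \<Rightarrow> real) \<Rightarrow> (real \<Rightarrow> real) \<Rightarrow> real \<Rightarrow> real" where
  "Hop \<epsilon> s1 s2 \<beta> f g x =
     integral {w. \<epsilon> \<le> \<bar>w\<bar> \<and> \<bar>w\<bar> \<le> 1/2}
       (\<lambda>w. f (x + s1 * w) * g (x + s2 * w) / (w * \<bar>w\<bar> powr \<beta>))"

end

theory Submission
  imports Defs
begin


lemma unif_fs:
  fixes u :: "'i \<Rightarrow> 'a \<Rightarrow> 'b::banach"
  assumes b: "b summable_on I" and b0: "\<And>i. i \<in> I \<Longrightarrow> 0 \<le> b i"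
    and bnd: "\<And>i x. i\<in>I \<Longrightarrow> x\<in>S \<Longrightarrow> norm (u i x) \<le> b i"
  shows "uniform_limit S (\<lambda>F x. \<Sum>i\<in>F. u i x) (\<lambda>x. \<Sum>\<^sub>\<infinity>i\<in>I. u i x) (finite_subsets_at_top I)"
  unfolding uniform_limit_iff
proof (intro allI impI)
  fix e :: real assume e: "e > 0"
  obtain F0 where F0: "finite F0" "F0 \<subseteq> I" "dist (sum b F0) (infsum b I) \<le> e/2"
    using infsum_finite_approximation[OF b, of "e/2"] e by auto
  have absu: "(\<lambda>i. u i x) abs_summable_on J" if "x \<in> S" "J \<subseteq> I" for x J
    by (rule summable_on_comparison_test[OF summable_on_subset_banach[OF b that(2)]])
       (use bnd b0 that in auto)
  show "\<forall>\<^sub>F F in finite_subsets_at_top I. \<forall>x\<in>S. dist (\<Sum>i\<in>F. u i x) (\<Sum>\<^sub>\<infinity>i\<in>I. u i x) < e"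
    unfolding eventually_finite_subsets_at_top
  proof (intro exI[of _ F0] conjI allI impI ballI)
    fix F x assume F: "finite F \<and> F0 \<subseteq> F \<and> F \<subseteq> I" and x: "x \<in> S"
    have su: "(\<lambda>i. u i x) summable_on J" if "J \<subseteq> I" for J
      using abs_summable_summable[OF absu[OF x that]] .
    have "(\<Sum>\<^sub>\<infinity>i\<in>I. u i x) = (\<Sum>\<^sub>\<infinity>i\<in>F. u i x) + (\<Sum>\<^sub>\<infinity>i\<in>I-F. u i x)"
      using infsum_Un_disjoint[OF su su, of F "I-F"] F by (auto simp: Un_absorb1)
    also have "(\<Sum>\<^sub>\<infinity>i\<in>F. u i x) = (\<Sum>i\<in>F. u i x)" using F by simp
    finally have eq: "dist (\<Sum>i\<in>F. u i x) (\<Sum>\<^sub>\<infinity>i\<in>I. u i x) = norm (\<Sum>\<^sub>\<infinity>i\<in>I-F. u i x)"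
      by (simp add: dist_norm)
    have "norm (\<Sum>\<^sub>\<infinity>i\<in>I-F. u i x) \<le> (\<Sum>\<^sub>\<infinity>i\<in>I-F. norm (u i x))"
      by (rule norm_infsum_bound) (use absu[OF x] in auto)
    also have "\<dots> \<le> (\<Sum>\<^sub>\<infinity>i\<in>I-F. b i)"
      by (rule infsum_mono[OF absu[OF x] summable_on_subset_banach[OF b]]) (use bnd x in auto)
    also have "(\<Sum>\<^sub>\<infinity>i\<in>I-F. b i) = infsum b I - sum b F"
      using infsum_Un_disjoint[OF summable_on_subset_banach[OF b] summable_on_subset_banach[OF b], of F "I-F"] F
      by (auto simp: Un_absorb1)
    also have "sum b F0 \<le> sum b F"
      by (rule sum_mono2) (use F F0 b0 in auto)
    hence "infsum b I - sum b F \<le> infsum b I - sum b F0" by simp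
    also have "\<dots> \<le> e/2" using F0(3) unfolding dist_real_def by linarith
    finally show "dist (\<Sum>i\<in>F. u i x) (\<Sum>\<^sub>\<infinity>i\<in>I. u i x) < e" using eq e by simp
  qed (use F0 in auto)
qed

lemma swap_integral_infsum:
  fixes u :: "'i \<Rightarrow> real \<Rightarrow> 'b::euclidean_space"
  assumes b: "b summable_on I" and b0: "\<And>i. i \<in> I \<Longrightarrow> 0 \<le> b i"
    and bnd: "\<And>i x. i\<in>I \<Longrightarrow> x\<in>{a..c} \<Longrightarrow> norm (u i x) \<le> b i"
    and cont: "\<And>i. i \<in> I \<Longrightarrow> continuous_on {a..c} (u i)"
  shows "continuous_on {a..c} (\<lambda>x. \<Sum>\<^sub>\<infinity>i\<in>I. u i x)"
    and "((\<lambda>i. integral {a..c} (u i)) has_sum integral {a..c} (\<lambda>x. \<Sum>\<^sub>\<infinity>i\<in>I. u i x)) I"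
proof -
  define v where "v i x = (if i \<in> I then u i x else 0)" for i x
  have cv0: "continuous_on {a..c} (v i)" for i
    by (cases "i \<in> I") (auto simp: v_def cont)
  have vI: "v i = u i" if "i \<in> I" for i using that by (auto simp: v_def)
  have infv: "(\<Sum>\<^sub>\<infinity>i\<in>I. v i x) = (\<Sum>\<^sub>\<infinity>i\<in>I. u i x)" for x
    by (rule infsum_cong) (simp add: vI)
  have ul: "uniform_limit {a..c} (\<lambda>F x. \<Sum>i\<in>F. v i x) (\<lambda>x. \<Sum>\<^sub>\<infinity>i\<in>I. v i x) (finite_subsets_at_top I)"
    by (rule unif_fs[OF b b0]) (use bnd in \<open>auto simp: vI\<close>)
  have cv: "continuous_on {a..c} (\<lambda>x. \<Sum>i\<in>F. v i x)" for F
    by (intro continuous_on_sum cv0)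
  have cU: "continuous_on {a..c} (\<lambda>x. \<Sum>\<^sub>\<infinity>i\<in>I. v i x)"
    by (rule uniform_limit_theorem[OF _ ul]) (auto simp: cv)
  then show "continuous_on {a..c} (\<lambda>x. \<Sum>\<^sub>\<infinity>i\<in>I. u i x)" by (simp add: infv)
  obtain Ii J where IJ: "\<And>F. ((\<lambda>x. \<Sum>i\<in>F. v i x) has_integral Ii F) {a..c}"
     "((\<lambda>x. \<Sum>\<^sub>\<infinity>i\<in>I. v i x) has_integral J) {a..c}" "(Ii \<longlongrightarrow> J) (finite_subsets_at_top I)"
    by (rule uniform_limit_integral[OF ul cv]) (simp, blast)
  have "\<forall>\<^sub>F F in finite_subsets_at_top I. Ii F = (\<Sum>i\<in>F. integral {a..c} (u i))"
    unfolding eventually_finite_subsets_at_top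
  proof (intro exI[of _ "{}"] conjI allI impI)
    fix F assume F: "finite F \<and> {} \<subseteq> F \<and> F \<subseteq> I"
    have "((\<lambda>x. \<Sum>i\<in>F. v i x) has_integral (\<Sum>i\<in>F. integral {a..c} (u i))) {a..c}"
      using F by (intro has_integral_sum) (auto simp: vI intro!: integrable_integral integrable_continuous_interval cont)
    then show "Ii F = (\<Sum>i\<in>F. integral {a..c} (u i))" using IJ(1) has_integral_unique by blast
  qed auto
  with IJ(3) have "((\<lambda>F. \<Sum>i\<in>F. integral {a..c} (u i)) \<longlongrightarrow> J) (finite_subsets_at_top I)"
    using tendsto_cong by fastforce
  moreover have "J = integral {a..c} (\<lambda>x. \<Sum>\<^sub>\<infinity>i\<in>I. u i x)"
    using IJ(2) by (simp add: infv integral_unique)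
  ultimately show "((\<lambda>i. integral {a..c} (u i)) has_sum integral {a..c} (\<lambda>x. \<Sum>\<^sub>\<infinity>i\<in>I. u i x)) I"
    by (simp add: has_sum_def)
qed


definition ee :: "real \<Rightarrow> complex" where "ee t = exp (2 * pi * \<i> * of_real t)"

definition fc :: "(real \<Rightarrow> complex) \<Rightarrow> int \<Rightarrow> complex" where
  "fc \<phi> n = integral {0..1} (\<lambda>x. \<phi> x * ee (- of_int n * x))"

lemma ee_add: "ee (a + b) = ee a * ee b"
  by (simp add: ee_def distrib_left exp_add)

lemma ee_0 [simp]: "ee 0 = 1" by (simp add: ee_def)

lemma norm_ee [simp]: "norm (ee t) = 1"
  unfolding ee_def by (simp add: norm_exp_eq_Re)

lemma ee_int [simp]: "ee (of_int k) = 1"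
proof -
  have "exp (2 * pi * \<i> * of_real (of_int k)) = exp ((2 * of_int k * pi) * \<i>)"
    by (simp add: mult_ac)
  also have "\<dots> = 1" by (rule exp_integer_2pi) auto
  finally show ?thesis by (simp add: ee_def)
qed

lemma ee_shift_int: "ee (t + of_int k) = ee t"
  by (simp add: ee_add)

lemma ee_minus: "ee (- t) = cnj (ee t)"
  by (simp add: ee_def exp_cnj)

lemma ee_mult_cnj: "ee t * cnj (ee t) = 1"
  by (metis ee_minus ee_add ee_0 add.right_inverse)

lemma continuous_on_ee [continuous_intros]:
  "continuous_on S g \<Longrightarrow> continuous_on S (\<lambda>x. ee (g x))"
  unfolding ee_def by (intro continuous_intros)

lemma has_vector_derivative_ee:
  "((\<lambda>x. ee (c * x)) has_vector_derivative (2 * pi * \<i> * of_real c * ee (c * x))) (at x within S)"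
proof -
  have "((\<lambda>z. exp (2 * pi * \<i> * of_real c * z)) has_field_derivative
        (exp (2 * pi * \<i> * of_real c * of_real x) * (2 * pi * \<i> * of_real c))) (at (of_real x))"
    by (auto intro!: derivative_eq_intros)
  from has_vector_derivative_real_field[OF this]
  show ?thesis by (simp add: ee_def mult_ac)
qed

lemma integral_ee:
  fixes k :: int
  shows "integral {0..1} (\<lambda>x. ee (of_int k * x)) = (if k = 0 then 1 else 0)"
proof (cases "k = 0")
  case True then show ?thesis by simp
next
  case False
  define c where "c = (2 * pi * \<i> * of_int k :: complex)"
  have c0: "c \<noteq> 0" using False by (simp add: c_def)
  have "((\<lambda>x. ee (of_int k * x) / c) has_vector_derivative ee (of_int k * x)) (at x within {0..1})" for x
    using has_vector_derivative_ee[of "of_int k" x "{0..1}"] c0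
    by (auto dest: has_vector_derivative_divide[where a=c] simp: c_def)
  from fundamental_theorem_of_calculus[OF _ this]
  have "((\<lambda>x. ee (of_int k * x)) has_integral (ee (of_int k) / c - ee 0 / c)) {0..1}" by simp
  then show ?thesis using False by (simp add: integral_unique)
qed

lemma norm_fc_le:
  assumes "continuous_on {0..1} \<phi>" "\<And>x. x \<in> {0..1} \<Longrightarrow> norm (\<phi> x) \<le> B"
  shows "norm (fc \<phi> n) \<le> B"
proof -
  have "norm (fc \<phi> n) \<le> B * (1 - 0)"
    unfolding fc_def
    by (rule integral_bound) (use assms in \<open>auto intro!: continuous_intros simp: norm_mult\<close>)
  then show ?thesis by simp
qed

lemma fourier_coeff_fc: "fourier_coeff f k = fc (\<lambda>x. complex_of_real (f x)) k"
  unfolding fourier_coeff_def fc_def ee_def by (simp add: mult_ac)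


lemma periodic1_int: "periodic1 g \<Longrightarrow> g (x + of_int k) = g x"
proof (induction k arbitrary: x rule: int_induct[where k=0])
  case base then show ?case by simp
next
  case (step1 i) then show ?case
    by (metis (no_types, opaque_lifting) add.assoc of_int_add of_int_1 periodic1_def)
next
  case (step2 i)
  have "g (x + of_int i) = g ((x + of_int (i - 1)) + 1)" by (simp add: algebra_simps)
  also have "\<dots> = g (x + of_int (i - 1))" using step2(3) unfolding periodic1_def by blast
  finally show ?case using step2 by simp
qed

lemma periodic_deriv:
  assumes p: "periodic1 g" and d: "\<And>x. g differentiable (at x)"
  shows "periodic1 (deriv g)"
  unfolding periodic1_def
proof
  fix x
  have "DERIV g (x + 1) :> deriv g (x + 1)" using d DERIV_deriv_iff_real_differentiable by blast
  then have "((\<lambda>y. g (y + 1)) has_field_derivative deriv g (x + 1)) (at x)" by (simp add: DERIV_shift)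
  moreover have "(\<lambda>y. g (y + 1)) = g" using p by (auto simp: periodic1_def)
  ultimately have "DERIV g x :> deriv g (x + 1)" by simp
  moreover have "DERIV g x :> deriv g x" using d DERIV_deriv_iff_real_differentiable by blast
  ultimately show "deriv g (x + 1) = deriv g x" using DERIV_unique by blast
qed

lemma smooth_D_diff: "smooth_fun f \<Longrightarrow> ((deriv ^^ n) f) differentiable (at x)"
  by (simp add: smooth_fun_def)

lemma smooth_D_DERIV: "smooth_fun f \<Longrightarrow> DERIV ((deriv ^^ n) f) x :> (deriv ^^ Suc n) f x"
  using smooth_D_diff[of f n x] DERIV_deriv_iff_real_differentiable by fastforce

lemma smooth_D_cont: "smooth_fun f \<Longrightarrow> continuous_on S ((deriv ^^ n) f)"
  by (meson continuous_at_imp_continuous_on differentiable_imp_continuous_within smooth_D_diff)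

lemma periodic_D: "smooth_fun f \<Longrightarrow> periodic1 f \<Longrightarrow> periodic1 ((deriv ^^ n) f)"
proof (induction n)
  case 0 then show ?case by simp
next
  case (Suc n)
  then show ?case using periodic_deriv[of "(deriv ^^ n) f"] smooth_D_diff[OF Suc(2), of n] by simp
qed

lemma fc_deriv:
  fixes g g' :: "real \<Rightarrow> real"
  assumes p: "periodic1 g" and d: "\<And>x. DERIV g x :> g' x" and c: "continuous_on {0..1} g'"
  shows "fc (\<lambda>x. of_real (g' x)) n = 2 * pi * \<i> * of_int n * fc (\<lambda>x. of_real (g x)) n"
proof -
  define h where "h x = complex_of_real (g x) * ee (- of_int n * x)" for x
  define h' where "h' x = complex_of_real (g x) * (2 * pi * \<i> * of_real (- of_int n) * ee (- of_int n * x))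
       + complex_of_real (g' x) * ee (- of_int n * x)" for x
  have "(h has_vector_derivative h' x) (at x within {0..1})" for x
    unfolding h_def h'_def
    by (intro has_vector_derivative_mult has_vector_derivative_of_real has_vector_derivative_ee
        DERIV_subset[OF d]) auto
  from fundamental_theorem_of_calculus[OF _ this]
  have "(h' has_integral (h 1 - h 0)) {0..1}" by simp
  moreover have "h 1 = h 0"
  proof -
    have "ee (- of_int n) = 1" by (metis ee_int of_int_minus)
    moreover have "g 1 = g 0" using p unfolding periodic1_def by (metis add_0)
    ultimately show ?thesis by (simp add: h_def)
  qed
  ultimately have "integral {0..1} h' = 0" by (simp add: integral_unique)
  moreover have cg: "continuous_on {0..1} g"
    using d by (meson DERIV_isCont continuous_at_imp_continuous_on)
  have i1: "(\<lambda>x. complex_of_real (g x) * ee (- of_int n * x)) integrable_on {0..1}"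
    by (intro integrable_continuous_interval continuous_intros cg)
  have i2: "(\<lambda>x. complex_of_real (g' x) * ee (- of_int n * x)) integrable_on {0..1}"
    by (intro integrable_continuous_interval continuous_intros c)
  have "h' = (\<lambda>x. (2 * pi * \<i> * of_real (- of_int n)) * (complex_of_real (g x) * ee (- of_int n * x))
       + complex_of_real (g' x) * ee (- of_int n * x))"
    unfolding h'_def by (auto simp: fun_eq_iff mult_ac)
  hence "integral {0..1} h' = 2 * pi * \<i> * of_real (- of_int n) * fc (\<lambda>x. of_real (g x)) n
            + fc (\<lambda>x. of_real (g' x)) n"
    unfolding fc_def
    using integral_add[OF integrable_on_mult_right[OF i1, of "2 * pi * \<i> * of_real (- of_int n)"] i2]
    by (simp only: integral_mult_right)
  ultimately show ?thesis by (simp add: algebra_simps add_eq_0_iff)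
qed

lemma fc_Dn:
  assumes s: "smooth_fun f" and p: "periodic1 f"
  shows "fc (\<lambda>x. of_real ((deriv ^^ n) f x)) k = (2 * pi * \<i> * of_int k) ^ n * fc (\<lambda>x. of_real (f x)) k"
proof (induction n)
  case 0 then show ?case by simp
next
  case (Suc n)
  have "fc (\<lambda>x. of_real ((deriv ^^ Suc n) f x)) k = 2 * pi * \<i> * of_int k * fc (\<lambda>x. of_real ((deriv ^^ n) f x)) k"
    by (rule fc_deriv[OF periodic_D[OF s p] smooth_D_DERIV[OF s] smooth_D_cont[OF s]])
  then show ?case using Suc by simp
qed

lemma bounded_cont_01:
  fixes h :: "real \<Rightarrow> 'b::real_normed_vector"
  assumes "continuous_on {0..1} h"
  obtains M where "M \<ge> 0" "\<And>x. x \<in> {0..1} \<Longrightarrow> norm (h x) \<le> M"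
proof -
  have "bounded (h ` {0..1})" by (rule compact_imp_bounded[OF compact_continuous_image[OF assms compact_Icc]])
  then obtain M where "\<forall>y\<in>h ` {0..1}. norm y \<le> M" unfolding bounded_iff by auto
  then have "\<And>x. x \<in> {0..1} \<Longrightarrow> norm (h x) \<le> max M 0" by (meson imageI max.coboundedI1)
  then show ?thesis using that[of "max M 0"] by simp
qed

lemma decay:
  assumes s: "smooth_fun f" and p: "periodic1 f"
  shows "\<exists>B. \<forall>k::int. (1 + (of_int k)\<^sup>2) ^ N * (cmod (fourier_coeff f k))\<^sup>2 \<le> B"
proof -
  obtain M where M: "M \<ge> 0" "\<And>x. x \<in> {0..1} \<Longrightarrow> norm ((deriv ^^ N) f x) \<le> M"
    using bounded_cont_01[OF smooth_D_cont[OF s]] by blast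
  obtain M0 where M0: "M0 \<ge> 0" "\<And>x. x \<in> {0..1} \<Longrightarrow> norm (f x) \<le> M0"
    using bounded_cont_01[OF smooth_D_cont[OF s, of _ 0]] by auto
  have contN: "continuous_on {0..1} (\<lambda>x. complex_of_real ((deriv ^^ N) f x))"
    by (intro continuous_intros smooth_D_cont[OF s])
  have cont0: "continuous_on {0..1} (\<lambda>x. complex_of_real (f x))"
    using smooth_D_cont[OF s, of _ 0] by (auto intro!: continuous_intros)
  show ?thesis
  proof (intro exI[of _ "max (2 ^ N * M\<^sup>2) (M0\<^sup>2)"] allI)
    fix k :: int
    show "(1 + (of_int k)\<^sup>2) ^ N * (cmod (fourier_coeff f k))\<^sup>2 \<le> max (2 ^ N * M\<^sup>2) (M0\<^sup>2)"
    proof (cases "k = 0")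
      case True
      have "cmod (fourier_coeff f k) \<le> M0"
        unfolding fourier_coeff_fc by (rule norm_fc_le[OF cont0]) (use M0 in auto)
      then have "(cmod (fourier_coeff f k))\<^sup>2 \<le> M0\<^sup>2" by (simp add: power_mono)
      then show ?thesis using True by simp
    next
      case False
      let ?a = "cmod (fourier_coeff f k)"
      have "cmod ((2 * pi * \<i> * of_int k) ^ N * fourier_coeff f k) \<le> M"
        unfolding fourier_coeff_fc fc_Dn[OF s p, symmetric] by (rule norm_fc_le[OF contN]) (use M in auto)
      then have "(2 * pi * \<bar>of_int k\<bar>) ^ N * ?a \<le> M"
        by (simp add: norm_mult norm_power)
      moreover have "\<bar>of_int k\<bar> ^ N * ?a \<le> (2 * pi * \<bar>of_int k\<bar>) ^ N * ?a"
      proof (intro mult_right_mono power_mono)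
        show "\<bar>real_of_int k\<bar> \<le> 2 * pi * \<bar>real_of_int k\<bar>" using pi_gt3 by (simp add: mult_le_cancel_right1)
      qed auto
      ultimately have A: "\<bar>of_int k\<bar> ^ N * ?a \<le> M" by linarith
      have "1 + (of_int k)\<^sup>2 \<le> 2 * (\<bar>of_int k :: real\<bar>)\<^sup>2"
      proof -
        have "1 \<le> \<bar>k\<bar>" using False by simp
        hence "1 \<le> \<bar>real_of_int k\<bar>" by (metis of_int_1_le_iff of_int_abs)
        hence "1 \<le> \<bar>real_of_int k\<bar> ^ 2" by (rule one_le_power)
        thus ?thesis by simp
      qed
      hence "(1 + (of_int k)\<^sup>2) ^ N \<le> (2 * (\<bar>of_int k :: real\<bar>)\<^sup>2) ^ N" by (rule power_mono) simp
      hence "(1 + (of_int k)\<^sup>2) ^ N * ?a\<^sup>2 \<le> (2 * (\<bar>of_int k :: real\<bar>)\<^sup>2) ^ N * ?a\<^sup>2"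
        by (rule mult_right_mono) simp
      also have "\<dots> = 2 ^ N * (\<bar>of_int k :: real\<bar> ^ N * ?a)\<^sup>2"
        by (simp add: power_mult_distrib power2_eq_square power_mult[symmetric] mult_ac)
           (metis power_abs abs_mult_self_eq power_mult_distrib)
      also have "\<dots> \<le> 2 ^ N * M\<^sup>2"
        using A by (intro mult_left_mono power_mono) auto
      finally show ?thesis by simp
    qed
  qed
qed


lemma summable_int_abs_powr:
  assumes q: "q > 1"
  shows "(\<lambda>k::int. (1 + \<bar>of_int k\<bar>) powr (- q) :: real) summable_on UNIV"
proof -
  have sn: "summable (\<lambda>n::nat. (real n) powr (- q))" using q by (subst summable_real_powr_iff) auto
  have sn1: "summable (\<lambda>n::nat. (1 + real n) powr (- q))"
    using sn summable_Suc_iff[of "\<lambda>n::nat. (real n) powr (- q)"] by (simp add: add.commute)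
  have A: "(\<lambda>n::nat. (1 + real n) powr (- q)) summable_on UNIV"
    using sn1 by (subst summable_on_UNIV_nonneg_real_iff) auto
  define h where "h k = (1 + \<bar>of_int k\<bar>) powr (- q)" for k :: int
  have "h summable_on (of_nat ` UNIV)"
    by (subst summable_on_reindex) (auto simp: inj_on_def h_def o_def A)
  moreover have "h summable_on ((\<lambda>n. - of_nat n) ` UNIV)"
    by (subst summable_on_reindex) (auto simp: inj_on_def h_def o_def A)
  ultimately have "h summable_on (of_nat ` UNIV \<union> (\<lambda>n. - of_nat n) ` UNIV)"
    by (rule summable_on_union)
  moreover have "of_nat ` UNIV \<union> (\<lambda>n. - of_nat n) ` UNIV = (UNIV :: int set)"
  proof -
    have "k \<in> of_nat ` UNIV \<union> (\<lambda>n. - of_nat n) ` UNIV" for k :: int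
    proof (cases "k \<ge> 0")
      case True then show ?thesis by (metis UnI1 nonneg_int_cases rangeI)
    next
      case False then have "k = - of_nat (nat (-k))" by simp
      then show ?thesis by blast
    qed
    then show ?thesis by blast
  qed
  ultimately show ?thesis by (simp add: h_def[abs_def])
qed

lemma summable_int_powr:
  assumes p: "p > 1/2"
  shows "(\<lambda>k::int. (1 + (of_int k)\<^sup>2) powr (- p) :: real) summable_on UNIV"
proof (rule summable_on_comparison_test)
  show "(\<lambda>k::int. 2 powr p * (1 + \<bar>of_int k\<bar>) powr (- (2 * p)) :: real) summable_on UNIV"
    by (intro summable_on_cmult_right summable_int_abs_powr) (use p in auto)
next
  fix k :: int
  let ?x = "real_of_int k"
  have le: "(1 + \<bar>?x\<bar>)\<^sup>2 / 2 \<le> 1 + ?x\<^sup>2"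
  proof -
    have "0 \<le> (\<bar>?x\<bar> - 1)\<^sup>2" by simp
    moreover have "(\<bar>?x\<bar> - 1)\<^sup>2 = ?x\<^sup>2 - 2 * \<bar>?x\<bar> + 1" by (simp add: power2_diff)
    moreover have "(1 + \<bar>?x\<bar>)\<^sup>2 = 1 + 2 * \<bar>?x\<bar> + ?x\<^sup>2" by (simp add: power2_sum)
    ultimately show ?thesis by simp
  qed
  have "(1 + ?x\<^sup>2) powr (- p) \<le> ((1 + \<bar>?x\<bar>)\<^sup>2 / 2) powr (- p)"
    by (rule powr_mono2') (use p le in \<open>auto intro: add_pos_nonneg\<close>)
  also have "\<dots> = 2 powr p * (1 + \<bar>?x\<bar>) powr (- (2 * p))"
  proof -
    have "((1 + \<bar>?x\<bar>)\<^sup>2 / 2) powr (- p) = ((1 + \<bar>?x\<bar>)\<^sup>2) powr (- p) / 2 powr (- p)"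
      by (rule powr_divide)
    also have "((1 + \<bar>?x\<bar>)\<^sup>2) powr (- p) = (1 + \<bar>?x\<bar>) powr (- (2 * p))"
    proof -
      have e2: "(1 + \<bar>?x\<bar>)\<^sup>2 = (1 + \<bar>?x\<bar>) powr 2"
        using powr_realpow[of "1 + \<bar>?x\<bar>" 2] by (simp add: add_pos_nonneg)
      show ?thesis by (metis e2 powr_powr mult.commute mult_minus_left)
    qed
    finally show ?thesis using powr_minus[of "2::real" p] by (metis divide_inverse inverse_inverse_eq mult.commute)
  qed
  finally show "(1 + ?x\<^sup>2) powr (- p) \<le> 2 powr p * (1 + \<bar>?x\<bar>) powr (- (2 * p))" .
qed auto


lemma cs_infsum:
  fixes x y :: "'i \<Rightarrow> real"
  assumes sx: "(\<lambda>i. (x i)\<^sup>2) summable_on I" and sy: "(\<lambda>i. (y i)\<^sup>2) summable_on I"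
  shows "(\<lambda>i. \<bar>x i\<bar> * \<bar>y i\<bar>) summable_on I"
    and "(\<Sum>\<^sub>\<infinity>i\<in>I. \<bar>x i\<bar> * \<bar>y i\<bar>) \<le> sqrt (\<Sum>\<^sub>\<infinity>i\<in>I. (x i)\<^sup>2) * sqrt (\<Sum>\<^sub>\<infinity>i\<in>I. (y i)\<^sup>2)"
proof -
  have fin: "(\<Sum>i\<in>F. \<bar>x i\<bar> * \<bar>y i\<bar>) \<le> sqrt (\<Sum>\<^sub>\<infinity>i\<in>I. (x i)\<^sup>2) * sqrt (\<Sum>\<^sub>\<infinity>i\<in>I. (y i)\<^sup>2)"
    if F: "finite F" "F \<subseteq> I" for F
  proof -
    have "(\<Sum>i\<in>F. \<bar>x i\<bar> * \<bar>y i\<bar>) \<le> L2_set x F * L2_set y F" by (rule L2_set_mult_ineq)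
    also have "\<dots> \<le> sqrt (\<Sum>\<^sub>\<infinity>i\<in>I. (x i)\<^sup>2) * sqrt (\<Sum>\<^sub>\<infinity>i\<in>I. (y i)\<^sup>2)"
      unfolding L2_set_def
      by (intro mult_mono real_sqrt_le_mono finite_sum_le_infsum sx sy F) (auto intro!: infsum_nonneg sum_nonneg)
    finally show ?thesis .
  qed
  show s: "(\<lambda>i. \<bar>x i\<bar> * \<bar>y i\<bar>) summable_on I"
    by (rule nonneg_bdd_above_summable_on) (auto intro!: bdd_aboveI2 fin)
  show "(\<Sum>\<^sub>\<infinity>i\<in>I. \<bar>x i\<bar> * \<bar>y i\<bar>) \<le> sqrt (\<Sum>\<^sub>\<infinity>i\<in>I. (x i)\<^sup>2) * sqrt (\<Sum>\<^sub>\<infinity>i\<in>I. (y i)\<^sup>2)"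
    by (rule infsum_le_finite_sums[OF s fin])
qed

definition wt :: "real \<Rightarrow> int \<Rightarrow> real" where "wt s k = (1 + (of_int k)\<^sup>2) powr s"

lemma one_plus_sq_pos [simp]: "1 + (real_of_int k)\<^sup>2 > 0" by (simp add: add_pos_nonneg)
lemma one_plus_sq_ne0 [simp]: "1 + (real_of_int k)\<^sup>2 \<noteq> 0" using one_plus_sq_pos[of k] by linarith
lemma wt_pos [simp]: "wt s k > 0" by (simp add: wt_def)
lemma wt_nonneg [simp]: "wt s k \<ge> 0" using wt_pos[of s k] by linarith
lemma wt_add: "wt (a + b) k = wt a k * wt b k" by (simp add: wt_def powr_add)
lemma wt_ge1: "s \<ge> 0 \<Longrightarrow> wt s k \<ge> 1" by (simp add: wt_def ge_one_powr_ge_zero)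

lemma smooth_summable:
  assumes s: "smooth_fun f" and p: "periodic1 f"
  shows "(\<lambda>k. wt r k * (cmod (fourier_coeff f k))\<^sup>2) summable_on UNIV"
proof -
  obtain N :: nat where N: "real N \<ge> r + 1" by (meson real_arch_simple order_trans le_add_same_cancel1 nle_le)
  obtain B where B: "\<And>k::int. (1 + (of_int k)\<^sup>2) ^ N * (cmod (fourier_coeff f k))\<^sup>2 \<le> B"
    using decay[OF s p, of N] by blast
  show ?thesis
  proof (rule summable_on_comparison_test)
    show "(\<lambda>k. B * wt (r - N) k) summable_on UNIV"
      unfolding wt_def using summable_int_powr[of "N - r"] N
      by (intro summable_on_cmult_right) (simp add: minus_diff_eq)
  next
    fix k :: int
    have "wt r k = wt (r - N) k * (1 + (of_int k)\<^sup>2) ^ N"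
      using wt_add[of "r - N" N k] by (simp add: wt_def powr_realpow add_pos_nonneg)
    then have "wt r k * (cmod (fourier_coeff f k))\<^sup>2 = wt (r - N) k * ((1 + (of_int k)\<^sup>2) ^ N * (cmod (fourier_coeff f k))\<^sup>2)"
      by simp
    also have "\<dots> \<le> wt (r - N) k * B" by (rule mult_left_mono[OF B]) simp
    finally show "wt r k * (cmod (fourier_coeff f k))\<^sup>2 \<le> B * wt (r - N) k" by (simp add: mult_ac)
  qed auto
qed

lemma l1_bound:
  fixes a :: "int \<Rightarrow> real"
  assumes r: "r > 1/2" and sa: "(\<lambda>k. wt r k * (a k)\<^sup>2) summable_on UNIV"
  shows "(\<lambda>k. \<bar>a k\<bar>) summable_on UNIV"
    and "(\<Sum>\<^sub>\<infinity>k. \<bar>a k\<bar>) \<le> sqrt (\<Sum>\<^sub>\<infinity>k. wt (-r) k) * sqrt (\<Sum>\<^sub>\<infinity>k. wt r k * (a k)\<^sup>2)"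
proof -
  define x where "x k = sqrt (wt (-r) k)" for k
  define y where "y k = sqrt (wt r k) * a k" for k
  have xy: "\<bar>x k\<bar> * \<bar>y k\<bar> = \<bar>a k\<bar>" for k
  proof -
    have "wt (-r) k * wt r k = 1" using wt_add[of "-r" r k] by (simp add: wt_def del: powr_minus)
    then have "sqrt (wt (-r) k) * sqrt (wt r k) = 1" by (metis real_sqrt_mult real_sqrt_one)
    then show ?thesis by (simp add: x_def y_def abs_mult mult.assoc[symmetric])
  qed
  have sx: "(\<lambda>k. (x k)\<^sup>2) summable_on UNIV"
    using summable_int_powr[OF r] by (simp add: x_def wt_def)
  have sy: "(\<lambda>k. (y k)\<^sup>2) summable_on UNIV"
    using sa by (simp add: y_def power_mult_distrib)
  have x2: "(x k)\<^sup>2 = wt (-r) k" for k by (simp add: x_def)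
  have y2: "(y k)\<^sup>2 = wt r k * (a k)\<^sup>2" for k by (simp add: y_def power_mult_distrib)
  from cs_infsum[OF sx sy] show "(\<lambda>k. \<bar>a k\<bar>) summable_on UNIV"
    and "(\<Sum>\<^sub>\<infinity>k. \<bar>a k\<bar>) \<le> sqrt (\<Sum>\<^sub>\<infinity>k. wt (-r) k) * sqrt (\<Sum>\<^sub>\<infinity>k. wt r k * (a k)\<^sup>2)"
    unfolding xy x2 y2 by simp_all
qed

lemma smooth_l1:
  assumes s: "smooth_fun f" and p: "periodic1 f"
  shows "(\<lambda>k. cmod (fourier_coeff f k)) summable_on UNIV"
  using l1_bound(1)[of 1 "\<lambda>k. cmod (fourier_coeff f k)"] smooth_summable[OF s p, of 1] by simp


lemma ee_cis: "ee x = cis (2 * pi * x)"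
  by (simp add: ee_def cis_conv_exp mult_ac)

lemma cis_periodic_eq:
  assumes p: "periodic1 \<psi>" and c: "cis a = cis b"
  shows "\<psi> (a / (2 * pi)) = \<psi> (b / (2 * pi))"
proof -
  from c have "exp (\<i> * complex_of_real a) = exp (\<i> * complex_of_real b)" by (simp add: cis_conv_exp)
  then obtain n :: int where n: "\<i> * complex_of_real a = \<i> * complex_of_real b + (of_int (2 * n) * pi) * \<i>"
    using exp_eq by blast
  then have "complex_of_real a = complex_of_real (b + 2 * n * pi)"
    by (simp add: algebra_simps) (metis (no_types, lifting) complex_i_not_zero mult.commute mult_left_cancel ring_class.ring_distribs(1))
  then have "a = b + 2 * n * pi" using of_real_eq_iff by blast
  then have "a / (2 * pi) = b / (2 * pi) + of_int n" by (simp add: field_simps)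
  then show ?thesis using periodic1_int[OF p] by simp
qed

definition hcirc :: "(real \<Rightarrow> real) \<Rightarrow> complex \<Rightarrow> real" where
  "hcirc \<psi> z = \<psi> (Arg z / (2 * pi))"

lemma hcirc_ee: "periodic1 \<psi> \<Longrightarrow> hcirc \<psi> (ee x) = \<psi> x"
proof -
  assume p: "periodic1 \<psi>"
  have "cis (Arg (ee x)) = cis (2 * pi * x)"
    using cis_Arg[of "ee x"] by (simp add: ee_cis)
  from cis_periodic_eq[OF p this] show ?thesis by (simp add: hcirc_def)
qed

lemma hcirc_Arg2pi:
  assumes p: "periodic1 \<psi>" and z: "z \<noteq> 0"
  shows "hcirc \<psi> z = \<psi> (Arg2pi z / (2 * pi))"
proof -
  have "is_Arg z (Arg2pi z)" using Arg2pi by blast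
  then have "z = of_real (norm z) * cis (Arg2pi z)" by (simp add: is_Arg_def cis_conv_exp)
  then have "cis (Arg2pi z) = sgn z" using z by (simp add: sgn_eq) (metis nonzero_mult_div_cancel_left norm_eq_zero of_real_eq_0_iff)
  then have "cis (Arg z) = cis (Arg2pi z)" using cis_Arg[OF z] by simp
  from cis_periodic_eq[OF p this] show ?thesis by (simp add: hcirc_def)
qed

lemma hcirc_cont:
  assumes p: "periodic1 \<psi>" and c: "continuous_on UNIV \<psi>"
  shows "continuous_on (sphere 0 1) (hcirc \<psi>)"
proof (rule continuous_at_imp_continuous_on, intro ballI)
  fix z :: complex assume "z \<in> sphere 0 1"
  then have z: "z \<noteq> 0" by auto
  have cpsi: "isCont \<psi> x" for x using c by (simp add: continuous_on_eq_continuous_at)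
  show "isCont (hcirc \<psi>) z"
  proof (cases "z \<in> \<real>\<^sub>\<le>\<^sub>0")
    case False
    have "isCont (\<lambda>z. Arg z / (2 * pi)) z" using continuous_at_Arg[OF False] by (intro continuous_intros) auto
    then show ?thesis unfolding hcirc_def using cpsi by (rule isCont_o2)
  next
    case True
    then have "z \<notin> \<real>\<^sub>\<ge>\<^sub>0" using z by (metis complex_nonneg_Reals_iff complex_nonpos_Reals_iff complex_eq_iff less_eq_real_def nle_le zero_complex.sel(1) zero_complex.sel(2))
    then have "isCont (\<lambda>z. Arg2pi z / (2 * pi)) z" using continuous_at_Arg2pi by (intro continuous_intros) auto
    then have "isCont (\<lambda>z. \<psi> (Arg2pi z / (2 * pi))) z" using cpsi by (rule isCont_o2)
    then show ?thesis
    proof (rule continuous_transform_within[where \<delta> = "norm z"])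
      fix w assume "dist w z < norm z"
      then have "w \<noteq> 0" by (auto simp: dist_norm)
      then show "\<psi> (Arg2pi w / (2 * pi)) = hcirc \<psi> w" using hcirc_Arg2pi[OF p] by simp
    qed (use z in auto)
  qed
qed


definition tp :: "(int \<times> complex) list \<Rightarrow> real \<Rightarrow> complex" where
  "tp xs x = (\<Sum>(k,c)\<leftarrow>xs. c * ee (of_int k * x))"

lemma tp_Nil [simp]: "tp [] x = 0" by (simp add: tp_def)
lemma tp_Cons [simp]: "tp (kc # xs) x = snd kc * ee (of_int (fst kc) * x) + tp xs x"
  by (simp add: tp_def split: prod.splits)
lemma tp_append: "tp (xs @ ys) x = tp xs x + tp ys x" by (simp add: tp_def)

definition tpmul :: "(int \<times> complex) list \<Rightarrow> (int \<times> complex) list \<Rightarrow> (int \<times> complex) list" where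
  "tpmul xs ys = concat (map (\<lambda>(k,c). map (\<lambda>(l,d). (k + l, c * d)) ys) xs)"

lemma tp_mul: "tp (tpmul xs ys) x = tp xs x * tp ys x"
proof (induction xs)
  case Nil then show ?case by (simp add: tpmul_def)
next
  case (Cons a xs)
  obtain k c where a: "a = (k, c)" by force
  have "tp (map (\<lambda>(l,d). (k + l, c * d)) ys) x = c * ee (of_int k * x) * tp ys x"
    by (induction ys) (auto simp: algebra_simps ee_add[symmetric])
  then show ?case using Cons by (simp add: tpmul_def a tp_append algebra_simps)
qed

lemma rpf_tp:
  fixes p :: "complex \<Rightarrow> real"
  assumes "real_polynomial_function p"
  shows "\<exists>xs. \<forall>x. complex_of_real (p (ee x)) = tp xs x"
  using assms
proof (induction rule: real_polynomial_function.induct)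
  case (linear p)
  define A where "A = complex_of_real (p 1) / 2 - \<i> * complex_of_real (p \<i>) / 2"
  define B where "B = complex_of_real (p 1) / 2 + \<i> * complex_of_real (p \<i>) / 2"
  have "complex_of_real (p (ee x)) = tp [(1, A), (-1, B)] x" for x
  proof -
    let ?w = "ee x"
    have w: "?w = Re ?w *\<^sub>R 1 + Im ?w *\<^sub>R \<i>" by (simp add: complex_eq_iff)
    have "p ?w = Re ?w * p 1 + Im ?w * p \<i>"
      by (subst w) (simp add: linear_add[OF bounded_linear.linear[OF linear]] linear_scale[OF bounded_linear.linear[OF linear]])
    then have e1: "complex_of_real (p ?w) = complex_of_real (Re ?w) * complex_of_real (p 1) + complex_of_real (Im ?w) * complex_of_real (p \<i>)"
      by simp
    have e2: "complex_of_real (Re ?w) = (?w + ee (of_int (-1) * x)) / 2" by (simp add: complex_add_cnj ee_minus)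
    have e3: "complex_of_real (Im ?w) = - \<i> * (?w - ee (of_int (-1) * x)) / 2"
      by (simp add: ee_minus complex_diff_cnj) (metis (no_types, lifting) complex_i_mult_minus minus_minus mult.commute mult.left_commute)
    show ?thesis unfolding e1 e2 e3
      by (simp add: A_def B_def field_simps)
  qed
  then show ?case by blast
next
  case (const c)
  have "complex_of_real c = tp [(0, of_real c)] x" for x by simp
  then show ?case by blast
next
  case (add f g)
  then obtain xs ys where "\<forall>x. complex_of_real (f (ee x)) = tp xs x" "\<forall>x. complex_of_real (g (ee x)) = tp ys x" by blast
  then have "\<forall>x. complex_of_real (f (ee x) + g (ee x)) = tp (xs @ ys) x" by (simp add: tp_append)
  then show ?case by blast
next
  case (mult f g)
  then obtain xs ys where "\<forall>x. complex_of_real (f (ee x)) = tp xs x" "\<forall>x. complex_of_real (g (ee x)) = tp ys x" by blast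
  then have "\<forall>x. complex_of_real (f (ee x) * g (ee x)) = tp (tpmul xs ys) x" by (simp add: tp_mul)
  then show ?case by blast
qed

lemma trig_approx_real:
  assumes p: "periodic1 \<psi>" and c: "continuous_on UNIV \<psi>" and e: "e > 0"
  shows "\<exists>xs. \<forall>x. cmod (complex_of_real (\<psi> x) - tp xs x) < e"
proof -
  obtain g where g: "real_polynomial_function g" "\<And>z. z \<in> sphere 0 1 \<Longrightarrow> \<bar>hcirc \<psi> z - g z\<bar> < e"
    using Stone_Weierstrass_real_polynomial_function[OF compact_sphere hcirc_cont[OF p c] e] by blast
  obtain xs where xs: "\<forall>x. complex_of_real (g (ee x)) = tp xs x" using rpf_tp[OF g(1)] by blast
  have "cmod (complex_of_real (\<psi> x) - tp xs x) < e" for x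
  proof -
    have "ee x \<in> sphere 0 1" by simp
    from g(2)[OF this] have "\<bar>\<psi> x - g (ee x)\<bar> < e" by (simp add: hcirc_ee[OF p])
    then show ?thesis using xs by (metis norm_of_real of_real_diff real_norm_def)
  qed
  then show ?thesis by blast
qed


lemma continuous_on_tp [continuous_intros]: "continuous_on S (tp xs)"
  by (induction xs) (auto intro!: continuous_intros)

lemma tp_scale: "tp (map (\<lambda>(k,c). (k, a * c)) xs) x = a * tp xs x"
  by (induction xs) (auto simp: algebra_simps)

lemma fc_tp_orth:
  assumes c: "continuous_on {0..1} \<phi>" and z: "\<And>n. fc \<phi> n = 0"
  shows "integral {0..1} (\<lambda>x. \<phi> x * cnj (tp xs x)) = 0"
proof (induction xs)
  case Nil then show ?case by simp
next
  case (Cons a xs)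
  obtain k d where a: "a = (k, d)" by force
  have "cnj (ee (of_int k * x)) = ee (- of_int k * x)" for x by (simp add: ee_minus)
  then have "(\<lambda>x. \<phi> x * cnj (tp (a # xs) x)) = (\<lambda>x. cnj d * (\<phi> x * ee (- of_int k * x)) + \<phi> x * cnj (tp xs x))"
    by (auto simp: a algebra_simps)
  moreover have "integral {0..1} (\<lambda>x. cnj d * (\<phi> x * ee (- of_int k * x)) + \<phi> x * cnj (tp xs x))
      = cnj d * fc \<phi> k + integral {0..1} (\<lambda>x. \<phi> x * cnj (tp xs x))"
    unfolding fc_def
    by (subst integral_add) (auto intro!: integrable_continuous_interval continuous_intros c)
  ultimately show ?case using Cons z by simp
qed

lemma periodic_int_complex:
  fixes \<phi> :: "real \<Rightarrow> complex"
  assumes p: "\<And>x. \<phi> (x + 1) = \<phi> x"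
  shows "\<phi> (x + of_int k) = \<phi> x"
proof -
  have "periodic1 (\<lambda>x. Re (\<phi> x))" "periodic1 (\<lambda>x. Im (\<phi> x))" using p by (auto simp: periodic1_def)
  from periodic1_int[OF this(1)] periodic1_int[OF this(2)] show ?thesis by (simp add: complex_eq_iff)
qed

lemma fourier_uniqueness:
  fixes \<phi> :: "real \<Rightarrow> complex"
  assumes c: "continuous_on UNIV \<phi>" and p: "\<And>x. \<phi> (x + 1) = \<phi> x" and z: "\<And>n. fc \<phi> n = 0"
  shows "\<phi> x = 0"
proof -
  have c01: "continuous_on {0..1} \<phi>" using c by (rule continuous_on_subset) auto
  obtain M where M: "M \<ge> 0" "\<And>x. x \<in> {0..1} \<Longrightarrow> norm (\<phi> x) \<le> M" using bounded_cont_01[OF c01] by blast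
  have pRe: "periodic1 (\<lambda>x. Re (\<phi> x))" and pIm: "periodic1 (\<lambda>x. Im (\<phi> x))" using p by (auto simp: periodic1_def)
  have cRe: "continuous_on UNIV (\<lambda>x. Re (\<phi> x))" and cIm: "continuous_on UNIV (\<lambda>x. Im (\<phi> x))"
    using c by (auto intro!: continuous_intros)
  define I where "I = integral {0..1} (\<lambda>x. (cmod (\<phi> x))\<^sup>2)"
  have cI: "continuous_on {0..1} (\<lambda>x. (cmod (\<phi> x))\<^sup>2)" using c01 by (intro continuous_intros)
  have I_le: "I \<le> 2 * M * e" if e: "e > 0" for e
  proof -
    obtain xs1 where xs1: "\<And>x. cmod (complex_of_real (Re (\<phi> x)) - tp xs1 x) < e"
      using trig_approx_real[OF pRe cRe e] by blast
    obtain xs2 where xs2: "\<And>x. cmod (complex_of_real (Im (\<phi> x)) - tp xs2 x) < e"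
      using trig_approx_real[OF pIm cIm e] by blast
    define T where "T x = tp xs1 x + \<i> * tp xs2 x" for x
    have T: "T x = tp (xs1 @ map (\<lambda>(k,c). (k, \<i> * c)) xs2) x" for x
      by (simp add: T_def tp_append tp_scale)
    have Tb: "cmod (\<phi> x - T x) \<le> 2 * e" for x
    proof -
      have "\<phi> x - T x = (complex_of_real (Re (\<phi> x)) - tp xs1 x) + \<i> * (complex_of_real (Im (\<phi> x)) - tp xs2 x)"
        by (simp add: T_def algebra_simps complex_eq_iff)
      then have "cmod (\<phi> x - T x) \<le> cmod (complex_of_real (Re (\<phi> x)) - tp xs1 x) + cmod (complex_of_real (Im (\<phi> x)) - tp xs2 x)"
        by (metis norm_triangle_ineq mult.commute norm_ii norm_mult mult_1_right)
      then show ?thesis using xs1[of x] xs2[of x] by linarith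
    qed
    have cT: "continuous_on {0..1} T" unfolding T by (intro continuous_intros)
    have "complex_of_real I = integral {0..1} (\<lambda>x. complex_of_real ((cmod (\<phi> x))\<^sup>2))"
      unfolding I_def by (rule integral_linear[OF integrable_continuous_interval[OF cI] bounded_linear_of_real, symmetric, unfolded o_def])
    also have "\<dots> = integral {0..1} (\<lambda>x. \<phi> x * cnj (\<phi> x - T x) + \<phi> x * cnj (T x))"
      by (simp add: complex_norm_square[symmetric] algebra_simps del: of_real_power)
    also have "\<dots> = integral {0..1} (\<lambda>x. \<phi> x * cnj (\<phi> x - T x)) + integral {0..1} (\<lambda>x. \<phi> x * cnj (T x))"
      by (rule integral_add) (auto intro!: integrable_continuous_interval continuous_intros c01 cT)
    also have "integral {0..1} (\<lambda>x. \<phi> x * cnj (T x)) = 0"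
      unfolding T by (rule fc_tp_orth[OF c01 z])
    finally have eqI: "complex_of_real I = integral {0..1} (\<lambda>x. \<phi> x * cnj (\<phi> x - T x))" by simp
    have "norm (integral {0..1} (\<lambda>x. \<phi> x * cnj (\<phi> x - T x))) \<le> (M * (2 * e)) * (1 - 0)"
    proof (rule integral_bound)
      show "continuous_on {0..1} (\<lambda>x. \<phi> x * cnj (\<phi> x - T x))" by (intro continuous_intros c01 cT)
      fix t :: real assume "t \<in> {0..1}"
      then show "norm (\<phi> t * cnj (\<phi> t - T t)) \<le> M * (2 * e)"
        unfolding norm_mult complex_mod_cnj using M Tb by (intro mult_mono) auto
    qed simp
    then have "norm (complex_of_real I) \<le> 2 * M * e" using eqI by simp
    then show ?thesis by simp
  qed
  have I0: "I \<ge> 0" unfolding I_def by (rule integral_nonneg) (auto intro: integrable_continuous_interval cI)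
  have "I \<le> 0"
  proof (rule ccontr)
    assume "\<not> I \<le> 0"
    then have "I > 0" by simp
    define e where "e = I / (4 * (M + 1))"
    have e: "e > 0" using \<open>I > 0\<close> M by (simp add: e_def)
    have "2 * M * e < I"
      using \<open>I > 0\<close> M(1) by (simp add: e_def field_simps add_pos_nonneg)
    with I_le[OF e] show False by linarith
  qed
  with I0 have "I = 0" by simp
  then have hi: "((\<lambda>x. (cmod (\<phi> x))\<^sup>2) has_integral 0) (cbox 0 1)"
    using integrable_continuous_interval[OF cI] by (auto simp: I_def has_integral_integral)
  have zero01: "\<phi> y = 0" if "y \<in> {0..1}" for y
  proof -
    have "(cmod (\<phi> y))\<^sup>2 = 0"
      by (rule has_integral_0_cbox_imp_0[OF _ _ hi]) (use cI that in auto)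
    then show ?thesis by simp
  qed
  have "\<phi> x = \<phi> ((x - of_int \<lfloor>x\<rfloor>) + of_int \<lfloor>x\<rfloor>)" by simp
  also have "\<dots> = \<phi> (x - of_int \<lfloor>x\<rfloor>)" by (rule periodic_int_complex[of \<phi>, OF p])
  also have "\<dots> = 0" by (rule zero01) (auto simp: of_int_floor_le less_imp_le, linarith)
  finally show ?thesis .
qed


definition fser :: "(int \<Rightarrow> complex) \<Rightarrow> real \<Rightarrow> complex" where
  "fser c x = (\<Sum>\<^sub>\<infinity>k. c k * ee (of_int k * x))"

lemma has_sum_single:
  fixes g :: "int \<Rightarrow> complex"
  shows "((\<lambda>k. if k = n then g k else 0) has_sum g n) UNIV"
proof -
  have "((\<lambda>k. if k = n then g k else 0) has_sum (sum (\<lambda>k. if k = n then g k else 0) {n})) {n}"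
    by (rule has_sum_finite) simp
  then have "((\<lambda>k. if k = n then g k else 0) has_sum g n) {n}" by simp
  then show ?thesis by (rule has_sum_cong_neutral[THEN iffD1, rotated -1]) auto
qed

lemma fser_props:
  fixes c :: "int \<Rightarrow> complex"
  assumes s: "(\<lambda>k. cmod (c k)) summable_on UNIV"
  shows "continuous_on UNIV (fser c)"
    and "\<And>x. fser c (x + 1) = fser c x"
    and "\<And>n. fc (fser c) n = c n"
    and "\<And>x. ((\<lambda>k. c k * ee (of_int k * x)) has_sum fser c x) UNIV"
proof -
  have bnd: "norm (c k * ee (of_int k * x)) \<le> cmod (c k)" for k x by (simp add: norm_mult)
  have ul: "uniform_limit UNIV (\<lambda>F x. \<Sum>k\<in>F. c k * ee (of_int k * x)) (fser c) (finite_subsets_at_top UNIV)"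
    unfolding fser_def by (rule unif_fs[OF s]) (auto simp: bnd)
  show "continuous_on UNIV (fser c)"
    by (rule uniform_limit_theorem[OF _ ul]) (auto intro!: always_eventually continuous_intros)
  show "fser c (x + 1) = fser c x" for x
  proof -
    have "ee (of_int k * (x + 1)) = ee (of_int k * x)" for k
      using ee_shift_int[of "of_int k * x" k] by (simp add: algebra_simps)
    then show ?thesis by (simp add: fser_def)
  qed
  have summ: "(\<lambda>k. c k * ee (of_int k * x)) summable_on UNIV" for x
    by (rule abs_summable_summable, rule summable_on_comparison_test[OF s]) (auto simp: bnd)
  then show "((\<lambda>k. c k * ee (of_int k * x)) has_sum fser c x) UNIV" for x
    unfolding fser_def by (rule has_sum_infsum)
  show "fc (fser c) n = c n" for n
  proof -
    define u where "u k x = c k * ee (of_int k * x) * ee (- of_int n * x)" for k x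
    have "((\<lambda>k. integral {0..1} (u k)) has_sum integral {0..1} (\<lambda>x. \<Sum>\<^sub>\<infinity>k. u k x)) UNIV"
      by (rule swap_integral_infsum(2)[OF s]) (auto simp: u_def norm_mult intro!: continuous_intros)
    moreover have "integral {0..1} (u k) = (if k = n then c k else 0)" for k
    proof -
      have "u k = (\<lambda>x. c k * ee (of_int (k - n) * x))"
        by (auto simp: u_def fun_eq_iff ee_add[symmetric] algebra_simps)
      then show ?thesis using integral_ee[of "k - n"] by (simp del: of_int_diff add: of_int_diff[symmetric])
    qed
    moreover have "(\<lambda>x. \<Sum>\<^sub>\<infinity>k. u k x) = (\<lambda>x. fser c x * ee (- of_int n * x))"
      by (auto simp: u_def fser_def infsum_cmult_left' fun_eq_iff)
    ultimately have "((\<lambda>k. if k = n then c k else 0) has_sum fc (fser c) n) UNIV"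
      by (simp add: fc_def)
    then show ?thesis using has_sum_single[of n c] has_sum_unique by blast
  qed
qed

lemma fourier_inversion:
  assumes sm: "smooth_fun f" and p: "periodic1 f"
  shows "((\<lambda>k. fourier_coeff f k * ee (of_int k * x)) has_sum complex_of_real (f x)) UNIV"
proof -
  let ?c = "fourier_coeff f"
  have s: "(\<lambda>k. cmod (?c k)) summable_on UNIV" by (rule smooth_l1[OF sm p])
  note F = fser_props[OF s]
  define \<phi> where "\<phi> x = complex_of_real (f x) - fser ?c x" for x
  have cf: "continuous_on UNIV f" using smooth_D_cont[OF sm, of _ 0] by simp
  have c: "continuous_on UNIV \<phi>" unfolding \<phi>_def by (intro continuous_intros cf F(1))
  have pp: "\<phi> (x + 1) = \<phi> x" for x using p F(2) by (simp add: \<phi>_def periodic1_def)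
  have z: "fc \<phi> n = 0" for n
  proof -
    have c01f: "continuous_on {0..1} (\<lambda>x. complex_of_real (f x) * ee (- of_int n * x))"
      using cf by (intro continuous_intros) (auto intro: continuous_on_subset)
    have c01F: "continuous_on {0..1} (\<lambda>x. fser ?c x * ee (- of_int n * x))"
      using F(1) by (intro continuous_intros) (auto intro: continuous_on_subset)
    have "fc \<phi> n = fc (\<lambda>x. complex_of_real (f x)) n - fc (fser ?c) n"
      unfolding fc_def \<phi>_def left_diff_distrib
      by (rule integral_diff[OF integrable_continuous_interval[OF c01f] integrable_continuous_interval[OF c01F]])
    then show ?thesis by (simp add: F(3) fourier_coeff_fc)
  qed
  have "\<phi> x = 0" by (rule fourier_uniqueness[OF c pp z])
  then have "fser ?c x = complex_of_real (f x)" by (simp add: \<phi>_def)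
  with F(4)[of x] show ?thesis by simp
qed


lemma ee_diff_le2: "cmod (ee a - ee b) \<le> 2"
  using norm_triangle_ineq4[of "ee a" "ee b"] by simp

lemma has_sum_diff:
  fixes f g :: "'a \<Rightarrow> 'b::{topological_ab_group_add}"
  assumes "(f has_sum a) A" "(g has_sum b) A"
  shows "((\<lambda>x. f x - g x) has_sum (a - b)) A"
proof -
  have "((\<lambda>x. - g x) has_sum (- b)) A" using assms(2) has_sum_uminus[where f=g and a="- b" and A=A] by simp
  from has_sum_add[OF assms(1) this] show ?thesis by simp
qed

lemma prod_has_sum:
  fixes a b :: "int \<Rightarrow> complex"
  assumes sa: "(\<lambda>k. cmod (a k)) summable_on UNIV" and sb: "(\<lambda>k. cmod (b k)) summable_on UNIV"
    and ha: "(a has_sum A) UNIV" and hb: "(b has_sum B) UNIV"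
  shows "((\<lambda>(k,l). a k * b l) has_sum (A * B)) UNIV"
    and "(\<lambda>(k,l). cmod (a k) * cmod (b l)) summable_on UNIV"
proof -
  have fin: "(\<Sum>(k,l)\<in>F. cmod (a k) * cmod (b l)) \<le> (\<Sum>\<^sub>\<infinity>k. cmod (a k)) * (\<Sum>\<^sub>\<infinity>k. cmod (b k))"
    if F: "finite F" for F
  proof -
    have "(\<Sum>(k,l)\<in>F. cmod (a k) * cmod (b l)) \<le> (\<Sum>(k,l)\<in>fst ` F \<times> snd ` F. cmod (a k) * cmod (b l))"
      by (rule sum_mono2) (use F in \<open>auto simp: finite_cartesian_product intro: rev_image_eqI\<close>)
    also have "\<dots> = (\<Sum>k\<in>fst ` F. cmod (a k)) * (\<Sum>l\<in>snd ` F. cmod (b l))"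
      by (simp add: sum_product sum.cartesian_product)
    also have "\<dots> \<le> (\<Sum>\<^sub>\<infinity>k. cmod (a k)) * (\<Sum>\<^sub>\<infinity>k. cmod (b k))"
      by (intro mult_mono finite_sum_le_infsum sa sb sum_nonneg infsum_nonneg) (use F in auto)
    finally show ?thesis .
  qed
  show abs: "(\<lambda>(k,l). cmod (a k) * cmod (b l)) summable_on UNIV"
    by (rule nonneg_bdd_above_summable_on) (auto intro!: bdd_aboveI2 fin)
  have sum2: "(\<lambda>(k,l). a k * b l) summable_on UNIV"
    by (rule abs_summable_summable) (use abs in \<open>simp add: case_prod_unfold norm_mult\<close>)
  show "((\<lambda>(k,l). a k * b l) has_sum (A * B)) UNIV"
  proof -
    have "((\<lambda>(k,l). a k * b l) has_sum (A * B)) (Sigma UNIV (\<lambda>_. UNIV))"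
    proof (rule has_sum_SigmaI[where g = "\<lambda>k. a k * B"])
      show "((\<lambda>l. case (k, l) of (k, l) \<Rightarrow> a k * b l) has_sum a k * B) UNIV" for k
        using has_sum_cmult_right[OF hb, of "a k"] by simp
      show "((\<lambda>k. a k * B) has_sum A * B) UNIV" by (rule has_sum_cmult_left[OF ha])
      show "(\<lambda>(k,l). a k * b l) summable_on Sigma UNIV (\<lambda>_. UNIV)" using sum2 by simp
    qed
    then show ?thesis by simp
  qed
qed

lemma reflect_integral:
  fixes \<phi> :: "real \<Rightarrow> 'b::euclidean_space"
  assumes e: "0 < \<epsilon>" "\<epsilon> \<le> 1/2" and c: "continuous_on {w. \<epsilon> \<le> \<bar>w\<bar> \<and> \<bar>w\<bar> \<le> 1/2} \<phi>"
  shows "(\<phi> has_integral integral {\<epsilon>..1/2} (\<lambda>w. \<phi> w + \<phi> (-w))) {w. \<epsilon> \<le> \<bar>w\<bar> \<and> \<bar>w\<bar> \<le> 1/2}"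
proof -
  have A: "{w. \<epsilon> \<le> \<bar>w\<bar> \<and> \<bar>w\<bar> \<le> 1/2} = {-(1/2)..-\<epsilon>} \<union> {\<epsilon>..1/2}" using e by auto
  have c1: "continuous_on {\<epsilon>..1/2} \<phi>" using c by (rule continuous_on_subset) (use e in auto)
  have c2: "continuous_on {-(1/2)..-\<epsilon>} \<phi>" using c by (rule continuous_on_subset) (use e in \<open>auto simp: abs_if\<close>)
  have c2': "continuous_on {\<epsilon>..1/2} (\<lambda>w. \<phi> (-w))"
    using c by (intro continuous_on_compose2[OF c]) (use e in \<open>auto intro!: continuous_intros simp: abs_if\<close>)
  have h1: "(\<phi> has_integral integral {\<epsilon>..1/2} \<phi>) {\<epsilon>..1/2}"
    by (rule integrable_integral[OF integrable_continuous_interval[OF c1]])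
  have "((\<lambda>w. \<phi> (-w)) has_integral integral {\<epsilon>..1/2} (\<lambda>w. \<phi> (-w))) {\<epsilon>..1/2}"
    by (rule integrable_integral[OF integrable_continuous_interval[OF c2']])
  then have h2: "(\<phi> has_integral integral {\<epsilon>..1/2} (\<lambda>w. \<phi> (-w))) {-(1/2)..-\<epsilon>}"
    using has_integral_reflect_real[of \<phi> _ "-\<epsilon>" "-(1/2)"] by simp
  have "(\<phi> has_integral (integral {\<epsilon>..1/2} (\<lambda>w. \<phi> (-w)) + integral {\<epsilon>..1/2} \<phi>)) ({-(1/2)..-\<epsilon>} \<union> {\<epsilon>..1/2})"
    by (rule has_integral_Un[OF h2 h1]) (use e in \<open>auto intro: negligible_empty simp: disjoint_iff\<close>)
  moreover have "integral {\<epsilon>..1/2} (\<lambda>w. \<phi> w + \<phi> (-w)) = integral {\<epsilon>..1/2} \<phi> + integral {\<epsilon>..1/2} (\<lambda>w. \<phi> (-w))"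
    by (rule integral_add[OF integrable_continuous_interval[OF c1] integrable_continuous_interval[OF c2']])
  ultimately show ?thesis unfolding A by (simp add: add.commute)
qed


definition Kc :: "real \<Rightarrow> real \<Rightarrow> real" where "Kc \<beta> w = 1 / (w * \<bar>w\<bar> powr \<beta>)"

definition mu :: "real \<Rightarrow> real \<Rightarrow> real \<Rightarrow> complex" where
  "mu \<epsilon> \<beta> \<xi> = integral {\<epsilon>..1/2} (\<lambda>w. complex_of_real (Kc \<beta> w) * (ee (\<xi> * w) - ee (- \<xi> * w)))"

lemma Kc_cont: "(\<And>w. w \<in> S \<Longrightarrow> w \<noteq> 0) \<Longrightarrow> continuous_on S (Kc \<beta>)"
  unfolding Kc_def by (intro continuous_intros) auto

lemma Kc_minus: "Kc \<beta> (-w) = - Kc \<beta> w" by (simp add: Kc_def)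

lemma Kc_bound:
  assumes "0 < \<epsilon>" "\<epsilon> \<le> w" "0 \<le> \<beta>"
  shows "\<bar>Kc \<beta> w\<bar> \<le> 1 / (\<epsilon> * \<epsilon> powr \<beta>)"
proof -
  have "\<epsilon> * \<epsilon> powr \<beta> \<le> w * w powr \<beta>" using assms by (intro mult_mono powr_mono2) auto
  moreover have "0 < \<epsilon> * \<epsilon> powr \<beta>" using assms by simp
  ultimately show ?thesis using assms by (simp add: Kc_def frac_le)
qed

lemma mu_bound:
  assumes e: "0 < \<epsilon>" "\<epsilon> \<le> 1/2" and b: "0 \<le> \<beta>"
  shows "cmod (mu \<epsilon> \<beta> \<xi>) \<le> 2 / (\<epsilon> * \<epsilon> powr \<beta>)"
proof -
  have "cmod (mu \<epsilon> \<beta> \<xi>) \<le> (2 / (\<epsilon> * \<epsilon> powr \<beta>)) * (1/2 - \<epsilon>)"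
    unfolding mu_def
  proof (rule integral_bound)
    show "continuous_on {\<epsilon>..1 / 2} (\<lambda>w. complex_of_real (Kc \<beta> w) * (ee (\<xi> * w) - ee (- \<xi> * w)))"
      using e by (intro continuous_intros Kc_cont) auto
    fix t assume t: "t \<in> {\<epsilon>..1/2}"
    have "cmod (ee (\<xi> * t) - ee (- \<xi> * t)) \<le> 2"
      using norm_triangle_ineq4[of "ee (\<xi> * t)" "ee (- \<xi> * t)"] by simp
    moreover have "\<bar>Kc \<beta> t\<bar> \<le> 1 / (\<epsilon> * \<epsilon> powr \<beta>)" using Kc_bound[of \<epsilon> t \<beta>] t e b by auto
    ultimately show "cmod (complex_of_real (Kc \<beta> t) * (ee (\<xi> * t) - ee (- \<xi> * t))) \<le> 2 / (\<epsilon> * \<epsilon> powr \<beta>)"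
      unfolding norm_mult norm_of_real
      using mult_mono[of "\<bar>Kc \<beta> t\<bar>" "1 / (\<epsilon> * \<epsilon> powr \<beta>)" "cmod (ee (\<xi> * t) - ee (- \<xi> * t))" 2] e
      by (simp add: mult.commute)
  qed (use e in auto)
  also have "\<dots> \<le> 2 / (\<epsilon> * \<epsilon> powr \<beta>)" using e by (intro mult_left_le) auto
  finally show ?thesis .
qed

lemma Hop_series:
  assumes e: "0 < \<epsilon>" "\<epsilon> \<le> 1/2" and b: "0 \<le> \<beta>"
    and sf: "smooth_fun f" and pf: "periodic1 f" and sg: "smooth_fun g" and pg: "periodic1 g"
  shows "((\<lambda>(k,l). fourier_coeff f k * fourier_coeff g l * ee (of_int (k + l) * x)
            * mu \<epsilon> \<beta> (of_int k * s1 + of_int l * s2))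
          has_sum complex_of_real (Hop \<epsilon> s1 s2 \<beta> f g x)) UNIV"
proof -
  let ?a = "fourier_coeff f" and ?b = "fourier_coeff g"
  let ?A = "{w. \<epsilon> \<le> \<bar>w\<bar> \<and> \<bar>w\<bar> \<le> 1/2}"
  define G where "G w = f (x + s1 * w) * g (x + s2 * w) / (w * \<bar>w\<bar> powr \<beta>)" for w
  have cf: "continuous_on UNIV f" using smooth_D_cont[OF sf, of _ 0] by simp
  have cg: "continuous_on UNIV g" using smooth_D_cont[OF sg, of _ 0] by simp
  have GK: "G w = f (x + s1 * w) * g (x + s2 * w) * Kc \<beta> w" for w by (simp add: G_def Kc_def)
  have cG: "continuous_on ?A G"
    unfolding GK using e
    by (intro continuous_intros Kc_cont continuous_on_compose2[OF cf] continuous_on_compose2[OF cg]) auto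
  have cG': "continuous_on ?A (\<lambda>w. complex_of_real (G w))" by (intro continuous_intros cG)
  have hG: "(G has_integral integral {\<epsilon>..1/2} (\<lambda>w. G w + G (-w))) ?A" by (rule reflect_integral[OF e cG])
  have hG': "((\<lambda>w. complex_of_real (G w)) has_integral
         integral {\<epsilon>..1/2} (\<lambda>w. complex_of_real (G w) + complex_of_real (G (-w)))) ?A"
    by (rule reflect_integral[OF e cG'])
  have "complex_of_real (Hop \<epsilon> s1 s2 \<beta> f g x) = complex_of_real (integral ?A G)"
    by (simp add: Hop_def G_def[abs_def])
  also have "\<dots> = integral ?A (\<lambda>w. complex_of_real (G w))"
    using integral_linear[OF has_integral_integrable[OF hG] bounded_linear_of_real[where 'a=complex]] by (simp add: o_def)
  also have "\<dots> = integral {\<epsilon>..1/2} (\<lambda>w. complex_of_real (G w) + complex_of_real (G (-w)))"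
    using hG' by (rule integral_unique)
  finally have H1: "complex_of_real (Hop \<epsilon> s1 s2 \<beta> f g x) = integral {\<epsilon>..1/2} (\<lambda>w. complex_of_real (G w) + complex_of_real (G (-w)))" .
  define u where "u = (\<lambda>(k,l) w. ?a k * ?b l * ee (of_int (k + l) * x) *
      (complex_of_real (Kc \<beta> w) * (ee ((of_int k * s1 + of_int l * s2) * w) - ee (- (of_int k * s1 + of_int l * s2) * w))))"
  have sa: "(\<lambda>k. cmod (?a k)) summable_on UNIV" by (rule smooth_l1[OF sf pf])
  have sb: "(\<lambda>k. cmod (?b k)) summable_on UNIV" by (rule smooth_l1[OF sg pg])
  have P: "((\<lambda>(k,l). ?a k * ee (of_int k * y1) * (?b l * ee (of_int l * y2))) has_sum
            complex_of_real (f y1) * complex_of_real (g y2)) UNIV" for y1 y2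
    by (rule prod_has_sum(1)) (use sa sb fourier_inversion[OF sf pf] fourier_inversion[OF sg pg] in \<open>auto simp: norm_mult\<close>)
  have eeprod: "ee (of_int k * (x + s1 * w)) * ee (of_int l * (x + s2 * w)) =
       ee (of_int (k + l) * x) * ee ((of_int k * s1 + of_int l * s2) * w)" for k l w
    by (simp add: ee_add[symmetric] algebra_simps)
  have fe: "(\<lambda>(k,l). ?a k * ee (of_int k * (x + s1 * w)) * (?b l * ee (of_int l * (x + s2 * w)))) =
     (\<lambda>(k,l). ?a k * ?b l * ee (of_int (k + l) * x) * ee ((of_int k * s1 + of_int l * s2) * w))" for w
  proof (intro ext, clarify)
    fix k l :: int
    have "?a k * ee (of_int k * (x + s1 * w)) * (?b l * ee (of_int l * (x + s2 * w))) =
        ?a k * ?b l * (ee (of_int k * (x + s1 * w)) * ee (of_int l * (x + s2 * w)))" by (simp only: mult_ac)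
    also have "\<dots> = ?a k * ?b l * (ee (of_int (k + l) * x) * ee ((of_int k * s1 + of_int l * s2) * w))"
      by (simp only: eeprod)
    finally show "?a k * ee (of_int k * (x + s1 * w)) * (?b l * ee (of_int l * (x + s2 * w))) =
        ?a k * ?b l * ee (of_int (k + l) * x) * ee ((of_int k * s1 + of_int l * s2) * w)" by (simp only: mult.assoc)
  qed
  have useries: "((\<lambda>kl. u kl w) has_sum (complex_of_real (G w) + complex_of_real (G (-w)))) UNIV" for w
  proof -
    have h1: "((\<lambda>(k,l). ?a k * ?b l * ee (of_int (k + l) * x) * ee ((of_int k * s1 + of_int l * s2) * w))
         has_sum complex_of_real (f (x + s1 * w)) * complex_of_real (g (x + s2 * w))) UNIV"
      using P[of "x + s1 * w" "x + s2 * w"] unfolding fe .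
    have h2: "((\<lambda>(k,l). ?a k * ?b l * ee (of_int (k + l) * x) * ee ((of_int k * s1 + of_int l * s2) * (-w)))
         has_sum complex_of_real (f (x + s1 * (-w))) * complex_of_real (g (x + s2 * (-w)))) UNIV"
      using P[of "x + s1 * (-w)" "x + s2 * (-w)"] unfolding fe .
    have h2': "((\<lambda>(k,l). ?a k * ?b l * ee (of_int (k + l) * x) * ee (- (of_int k * s1 + of_int l * s2) * w))
         has_sum complex_of_real (f (x + s1 * (-w))) * complex_of_real (g (x + s2 * (-w)))) UNIV"
      using h2 by (simp only: mult_minus_right mult_minus_left)
    have "((\<lambda>kl. complex_of_real (Kc \<beta> w) * ((case kl of (k,l) \<Rightarrow> ?a k * ?b l * ee (of_int (k + l) * x) * ee ((of_int k * s1 + of_int l * s2) * w))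
              - (case kl of (k,l) \<Rightarrow> ?a k * ?b l * ee (of_int (k + l) * x) * ee (- (of_int k * s1 + of_int l * s2) * w))))
        has_sum complex_of_real (Kc \<beta> w) * (complex_of_real (f (x + s1 * w)) * complex_of_real (g (x + s2 * w))
              - complex_of_real (f (x + s1 * (-w))) * complex_of_real (g (x + s2 * (-w))))) UNIV"
      by (intro has_sum_cmult_right has_sum_diff h1 h2')
    moreover have "complex_of_real (Kc \<beta> w) * (complex_of_real (f (x + s1 * w)) * complex_of_real (g (x + s2 * w))
              - complex_of_real (f (x + s1 * (-w))) * complex_of_real (g (x + s2 * (-w))))
          = complex_of_real (G w) + complex_of_real (G (-w))"
      by (simp add: GK Kc_minus algebra_simps)
    ultimately show ?thesis by (simp add: u_def case_prod_unfold algebra_simps)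
  qed
  define Km where "Km = 1 / (\<epsilon> * \<epsilon> powr \<beta>)"
  have sab: "(\<lambda>(k,l). cmod (?a k) * cmod (?b l)) summable_on UNIV"
    by (rule prod_has_sum(2)[OF sa sb has_sum_infsum[OF abs_summable_summable[OF sa]] has_sum_infsum[OF abs_summable_summable[OF sb]]])
  have sw: "((\<lambda>kl. integral {\<epsilon>..1/2} (u kl)) has_sum integral {\<epsilon>..1/2} (\<lambda>w. \<Sum>\<^sub>\<infinity>kl. u kl w)) UNIV"
  proof (rule swap_integral_infsum(2))
    show "(\<lambda>kl. 2 * Km * (case kl of (k,l) \<Rightarrow> cmod (?a k) * cmod (?b l))) summable_on UNIV"
      using sab by (intro summable_on_cmult_right) (simp add: case_prod_unfold)
    show "0 \<le> 2 * Km * (case kl of (k,l) \<Rightarrow> cmod (?a k) * cmod (?b l))" for kl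
      using e by (auto simp: Km_def case_prod_unfold)
    fix kl :: "int \<times> int" and w assume w: "w \<in> {\<epsilon>..1/2}"
    obtain k l where kl: "kl = (k, l)" by force
    have "cmod (ee ((of_int k * s1 + of_int l * s2) * w) - ee (- (of_int k * s1 + of_int l * s2) * w)) \<le> 2"
      by (rule ee_diff_le2)
    moreover have "\<bar>Kc \<beta> w\<bar> \<le> Km" using Kc_bound[of \<epsilon> w \<beta>] w e b by (auto simp: Km_def)
    ultimately have "\<bar>Kc \<beta> w\<bar> * cmod (ee ((of_int k * s1 + of_int l * s2) * w) - ee (- (of_int k * s1 + of_int l * s2) * w)) \<le> Km * 2"
      by (intro mult_mono) auto
    then have X: "(cmod (?a k) * cmod (?b l)) * (\<bar>Kc \<beta> w\<bar> * cmod (ee ((of_int k * s1 + of_int l * s2) * w) - ee (- (of_int k * s1 + of_int l * s2) * w)))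
        \<le> (cmod (?a k) * cmod (?b l)) * (Km * 2)"
      by (rule mult_left_mono) simp
    have "norm (u kl w) = (cmod (?a k) * cmod (?b l)) * (\<bar>Kc \<beta> w\<bar> * cmod (ee ((of_int k * s1 + of_int l * s2) * w) - ee (- (of_int k * s1 + of_int l * s2) * w)))"
      unfolding kl u_def by (simp only: case_prod_conv norm_mult norm_of_real norm_ee mult_1_right mult_1_left mult_ac)
    with X show "norm (u kl w) \<le> 2 * Km * (case kl of (k,l) \<Rightarrow> cmod (?a k) * cmod (?b l))"
      unfolding kl by (simp add: mult_ac)
  next
    fix kl :: "int \<times> int"
    obtain k l where kl: "kl = (k, l)" by force
    show "continuous_on {\<epsilon>..1/2} (u kl)"
      unfolding kl u_def using e by (auto intro!: continuous_intros Kc_cont)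
  qed
  have "integral {\<epsilon>..1/2} (\<lambda>w. \<Sum>\<^sub>\<infinity>kl. u kl w) = integral {\<epsilon>..1/2} (\<lambda>w. complex_of_real (G w) + complex_of_real (G (-w)))"
    using useries infsumI by (metis (no_types, lifting))
  moreover have "integral {\<epsilon>..1/2} (u kl) = (case kl of (k,l) \<Rightarrow> ?a k * ?b l * ee (of_int (k + l) * x) * mu \<epsilon> \<beta> (of_int k * s1 + of_int l * s2))" for kl
    by (auto simp: u_def mu_def case_prod_unfold integral_mult_right)
  ultimately show ?thesis using sw H1 by (simp add: case_prod_unfold)
qed


lemma Hop_fc:
  assumes e: "0 < \<epsilon>" "\<epsilon> \<le> 1/2" and b: "0 \<le> \<beta>"
    and sf: "smooth_fun f" and pf: "periodic1 f" and sg: "smooth_fun g" and pg: "periodic1 g"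
  shows "((\<lambda>k. fourier_coeff f k * fourier_coeff g (n - k) * mu \<epsilon> \<beta> (of_int k * s1 + of_int (n - k) * s2))
          has_sum fourier_coeff (Hop \<epsilon> s1 s2 \<beta> f g) n) UNIV"
proof -
  let ?a = "fourier_coeff f" and ?b = "fourier_coeff g"
  define c where "c = (\<lambda>(k,l). ?a k * ?b l * mu \<epsilon> \<beta> (of_int k * s1 + of_int l * s2))"
  define v where "v kl x = (case kl of (k,l) \<Rightarrow> ?a k * ?b l * ee (of_int (k + l) * x) * mu \<epsilon> \<beta> (of_int k * s1 + of_int l * s2)) * ee (- of_int n * x)" for kl x
  have hv: "((\<lambda>kl. v kl x) has_sum complex_of_real (Hop \<epsilon> s1 s2 \<beta> f g x) * ee (- of_int n * x)) UNIV" for x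
    unfolding v_def by (rule has_sum_cmult_left[OF Hop_series[OF e b sf pf sg pg]])
  have sa: "(\<lambda>k. cmod (?a k)) summable_on UNIV" by (rule smooth_l1[OF sf pf])
  have sb: "(\<lambda>k. cmod (?b k)) summable_on UNIV" by (rule smooth_l1[OF sg pg])
  have sab: "(\<lambda>(k,l). cmod (?a k) * cmod (?b l)) summable_on UNIV"
    by (rule prod_has_sum(2)[OF sa sb has_sum_infsum[OF abs_summable_summable[OF sa]] has_sum_infsum[OF abs_summable_summable[OF sb]]])
  define Mm where "Mm = 2 / (\<epsilon> * \<epsilon> powr \<beta>)"
  have Mm0: "Mm \<ge> 0" using e by (simp add: Mm_def)
  have sw: "((\<lambda>kl. integral {0..1} (v kl)) has_sum integral {0..1} (\<lambda>x. \<Sum>\<^sub>\<infinity>kl. v kl x)) UNIV"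
  proof (rule swap_integral_infsum(2))
    show "(\<lambda>kl. Mm * (case kl of (k,l) \<Rightarrow> cmod (?a k) * cmod (?b l))) summable_on UNIV"
      using sab by (intro summable_on_cmult_right) (simp add: case_prod_unfold)
    show "0 \<le> Mm * (case kl of (k,l) \<Rightarrow> cmod (?a k) * cmod (?b l))" for kl
      using Mm0 by (auto simp: case_prod_unfold)
    fix kl :: "int \<times> int" and x
    obtain k l where kl: "kl = (k, l)" by force
    have mb: "cmod (mu \<epsilon> \<beta> (of_int k * s1 + of_int l * s2)) \<le> Mm" unfolding Mm_def by (rule mu_bound[OF e b])
    have "norm (v kl x) = (cmod (?a k) * cmod (?b l)) * cmod (mu \<epsilon> \<beta> (of_int k * s1 + of_int l * s2))"
      unfolding kl v_def by (simp add: norm_mult)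
    also have "\<dots> \<le> (cmod (?a k) * cmod (?b l)) * Mm" by (rule mult_left_mono[OF mb]) simp
    finally show "norm (v kl x) \<le> Mm * (case kl of (k,l) \<Rightarrow> cmod (?a k) * cmod (?b l))"
      unfolding kl by (simp add: mult_ac)
  next
    fix kl :: "int \<times> int"
    obtain k l where kl: "kl = (k, l)" by force
    show "continuous_on {0..1} (v kl)" unfolding kl v_def by (auto intro!: continuous_intros)
  qed
  have iv: "integral {0..1} (v kl) = (if fst kl + snd kl = n then c kl else 0)" for kl
  proof -
    obtain k l where kl: "kl = (k, l)" by force
    have "v kl = (\<lambda>x. c kl * ee (of_int (k + l - n) * x))"
      by (auto simp: fun_eq_iff kl v_def c_def ee_add[symmetric] algebra_simps)
    then show ?thesis using integral_ee[of "k + l - n"] by (simp add: kl del: of_int_diff of_int_add)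
  qed
  have "integral {0..1} (\<lambda>x. \<Sum>\<^sub>\<infinity>kl. v kl x) = integral {0..1} (\<lambda>x. complex_of_real (Hop \<epsilon> s1 s2 \<beta> f g x) * ee (- of_int n * x))"
    using hv infsumI by (metis (no_types, lifting))
  also have "\<dots> = fourier_coeff (Hop \<epsilon> s1 s2 \<beta> f g) n" by (simp add: fourier_coeff_fc fc_def)
  finally have hs: "((\<lambda>kl. if fst kl + snd kl = n then c kl else 0) has_sum fourier_coeff (Hop \<epsilon> s1 s2 \<beta> f g) n) UNIV"
    using sw iv by simp
  let ?h = "\<lambda>k::int. (k, n - k)"
  have "((\<lambda>kl. if fst kl + snd kl = n then c kl else 0) has_sum fourier_coeff (Hop \<epsilon> s1 s2 \<beta> f g) n) (range ?h)"
    using hs by (rule has_sum_cong_neutral[THEN iffD1, rotated -1]) auto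
  then have "(((\<lambda>kl. if fst kl + snd kl = n then c kl else 0) \<circ> ?h) has_sum fourier_coeff (Hop \<epsilon> s1 s2 \<beta> f g) n) UNIV"
    by (subst has_sum_reindex[symmetric]) (auto simp: inj_on_def)
  then show ?thesis by (simp add: o_def c_def)
qed


lemma int_powr:
  fixes r p q :: real
  assumes p: "0 < p" "p \<le> q" and r: "r \<noteq> -1"
  shows "((\<lambda>w. w powr r) has_integral ((q powr (r+1) - p powr (r+1)) / (r+1))) {p..q}"
proof -
  have "((\<lambda>w. w powr (r+1) / (r+1)) has_vector_derivative w powr r) (at w within {p..q})" if w: "w \<in> {p..q}" for w
  proof -
    have w0: "w > 0" using w p by auto
    have "((\<lambda>w. w powr (r+1) / (r+1)) has_real_derivative (r+1) * w powr (r + 1 - 1) / (r+1)) (at w)"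
      using DERIV_cdivide[OF has_real_derivative_powr[OF w0, of "r+1"], of "r+1"] by simp
    then have "((\<lambda>w. w powr (r+1) / (r+1)) has_real_derivative w powr r) (at w)"
      using r by (simp add: add_eq_0_iff)
    then show ?thesis
      by (simp add: has_real_derivative_iff_has_vector_derivative has_vector_derivative_at_within)
  qed
  from fundamental_theorem_of_calculus[OF p(2) this] show ?thesis by (simp add: diff_divide_distrib)
qed

lemma ee_diff_sin: "cmod (ee y - ee (- y)) = 2 * \<bar>sin (2 * pi * y)\<bar>"
proof -
  have "ee y - ee (- y) = 2 * \<i> * sin (complex_of_real (2 * pi * y))"
    by (simp add: sin_exp_eq ee_def mult_ac)
  also have "\<dots> = 2 * \<i> * complex_of_real (sin (2 * pi * y))" by (simp only: sin_of_real)
  finally show ?thesis by (simp add: norm_mult)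
qed

definition Cb :: "real \<Rightarrow> real" where "Cb \<beta> = 2 * (2 * pi) powr \<beta> * (1 / (1 - \<beta>) + 1 / \<beta>)"

lemma mu_bound2:
  assumes e: "0 < \<epsilon>" "\<epsilon> \<le> 1/2" and b: "0 < \<beta>" "\<beta> < 1"
  shows "cmod (mu \<epsilon> \<beta> \<xi>) \<le> Cb \<beta> * \<bar>\<xi>\<bar> powr \<beta>"
proof (cases "\<xi> = 0")
  case True
  then show ?thesis by (simp add: mu_def)
next
  case False
  define a where "a = 2 * pi * \<bar>\<xi>\<bar>"
  have a0: "a > 0" using False by (simp add: a_def)
  define t where "t = max \<epsilon> (min (1/a) (1/2))"
  have t: "\<epsilon> \<le> t" "t \<le> 1/2" "t > 0" using e a0 by (auto simp: t_def)
  define F where "F w = complex_of_real (Kc \<beta> w) * (ee (\<xi> * w) - ee (- \<xi> * w))" for w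
  have cF: "continuous_on {\<epsilon>..1/2} F" unfolding F_def using e by (intro continuous_intros Kc_cont) auto
  have Kpos: "Kc \<beta> w = w powr (-1 - \<beta>)" if "w > 0" for w
  proof -
    have "w powr (1 + \<beta>) = w * w powr \<beta>" using that by (simp add: powr_add)
    then have "w powr (-1 - \<beta>) = inverse (w * w powr \<beta>)" using powr_minus[of w "1+\<beta>"] by simp
    then show ?thesis using that by (simp add: Kc_def divide_inverse)
  qed
  have nF: "cmod (F w) = w powr (-1 - \<beta>) * (2 * \<bar>sin (2 * pi * (\<xi> * w))\<bar>)" if "w > 0" for w
    using that ee_diff_sin[of "\<xi> * w"] by (simp add: F_def norm_mult Kpos)
  have b1: "cmod (F w) \<le> 2 * w powr (-1 - \<beta>)" if "w > 0" for w
    using nF[OF that] abs_sin_le_one[of "2 * pi * (\<xi> * w)"] by (simp add: mult_left_le)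
  have b2: "cmod (F w) \<le> 2 * a * w powr (- \<beta>)" if w: "w > 0" for w
  proof -
    have "\<bar>sin (2 * pi * (\<xi> * w))\<bar> \<le> a * w"
      using abs_sin_x_le_abs_x[of "2 * pi * (\<xi> * w)"] w by (simp add: a_def abs_mult)
    then have "cmod (F w) \<le> w powr (-1 - \<beta>) * (2 * (a * w))" unfolding nF[OF w]
      by (intro mult_left_mono) auto
    also have "w powr (-1 - \<beta>) * (2 * (a * w)) = 2 * a * (w powr (-1 - \<beta>) * w powr 1)"
      using w by simp
    also have "w powr (-1 - \<beta>) * w powr 1 = w powr (- \<beta>)" by (simp only: powr_add[symmetric]) simp
    finally show ?thesis .
  qed
  have split: "mu \<epsilon> \<beta> \<xi> = integral {\<epsilon>..t} F + integral {t..1/2} F"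
    unfolding mu_def F_def[symmetric]
    using Henstock_Kurzweil_Integration.integral_combine[where a=\<epsilon> and c=t and b="1/2" and f=F] t integrable_continuous_interval[OF cF] by simp
  have cF1: "continuous_on {\<epsilon>..t} F" using cF by (rule continuous_on_subset) (use t in auto)
  have cF2: "continuous_on {t..1/2} F" using cF by (rule continuous_on_subset) (use t in auto)
  have I1: "((\<lambda>w. w powr (- \<beta>)) has_integral ((t powr (1 - \<beta>) - \<epsilon> powr (1 - \<beta>)) / (1 - \<beta>))) {\<epsilon>..t}"
    using int_powr[of \<epsilon> t "- \<beta>"] e t b by (simp add: add.commute)
  have I2: "((\<lambda>w. w powr (-1 - \<beta>)) has_integral ((\<epsilon> powr 0 * 0 + (1/2) powr (- \<beta>) - t powr (- \<beta>)) / (- \<beta>))) {t..1/2}"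
    using int_powr[of t "1/2" "-1 - \<beta>"] t b by simp
  have n1: "cmod (integral {\<epsilon>..t} F) \<le> 2 * a * ((t powr (1 - \<beta>) - \<epsilon> powr (1 - \<beta>)) / (1 - \<beta>))"
  proof -
    have "cmod (integral {\<epsilon>..t} F) \<le> integral {\<epsilon>..t} (\<lambda>w. 2 * a * w powr (- \<beta>))"
      by (rule integral_norm_bound_integral) (use integrable_continuous_interval[OF cF1] integrable_on_mult_right[OF has_integral_integrable[OF I1], of "2 * a"] b2 e in auto)
    also have "\<dots> = 2 * a * ((t powr (1 - \<beta>) - \<epsilon> powr (1 - \<beta>)) / (1 - \<beta>))"
      using integral_unique[OF I1] by simp
    finally show ?thesis .
  qed
  have n2: "cmod (integral {t..1/2} F) \<le> 2 * ((t powr (- \<beta>) - (1/2) powr (- \<beta>)) / \<beta>)"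
  proof -
    have "cmod (integral {t..1/2} F) \<le> integral {t..1/2} (\<lambda>w. 2 * w powr (-1 - \<beta>))"
      by (rule integral_norm_bound_integral) (use integrable_continuous_interval[OF cF2] integrable_on_mult_right[OF has_integral_integrable[OF I2], of 2] b1 t in auto)
    also have "\<dots> = 2 * ((t powr (- \<beta>) - (1/2) powr (- \<beta>)) / \<beta>)"
      using integral_unique[OF I2] b by (simp add: field_simps)
    finally show ?thesis .
  qed
  have c1: "a * (t powr (1 - \<beta>) - \<epsilon> powr (1 - \<beta>)) \<le> a powr \<beta>"
  proof (cases "t = \<epsilon>")
    case True then show ?thesis by simp
  next
    case False
    then have "t \<le> 1/a" by (auto simp: t_def)
    then have "t powr (1 - \<beta>) \<le> (1/a) powr (1 - \<beta>)" using t b by (intro powr_mono2) auto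
    then have "a * t powr (1 - \<beta>) \<le> a * (1/a) powr (1 - \<beta>)" using a0 by simp
    also have "a * (1/a) powr (1 - \<beta>) = a powr \<beta>"
      using a0 by (simp add: powr_divide powr_diff)
    moreover have "0 \<le> a * \<epsilon> powr (1 - \<beta>)" using a0 by simp
    ultimately show ?thesis by (simp add: right_diff_distrib)
  qed
  have c2: "t powr (- \<beta>) - (1/2) powr (- \<beta>) \<le> a powr \<beta>"
  proof (cases "t = 1/2")
    case True show ?thesis unfolding True by simp
  next
    case False
    then have "1/a \<le> t" using e by (auto simp: t_def)
    then have "t powr (- \<beta>) \<le> (1/a) powr (- \<beta>)" using a0 b by (intro powr_mono2') auto
    also have "(1/a) powr (- \<beta>) = a powr \<beta>" using a0 by (simp add: powr_divide powr_minus)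
    finally show ?thesis using powr_ge_zero[of "1/2" "- \<beta>"] by linarith
  qed
  have "cmod (mu \<epsilon> \<beta> \<xi>) \<le> 2 * a * ((t powr (1 - \<beta>) - \<epsilon> powr (1 - \<beta>)) / (1 - \<beta>)) + 2 * ((t powr (- \<beta>) - (1/2) powr (- \<beta>)) / \<beta>)"
    unfolding split using n1 n2 norm_triangle_ineq[of "integral {\<epsilon>..t} F" "integral {t..1/2} F"] by linarith
  also have "\<dots> = 2 * (a * (t powr (1 - \<beta>) - \<epsilon> powr (1 - \<beta>))) / (1 - \<beta>) + 2 * (t powr (- \<beta>) - (1/2) powr (- \<beta>)) / \<beta>"
    by (simp add: field_simps)
  also have "\<dots> \<le> 2 * a powr \<beta> / (1 - \<beta>) + 2 * a powr \<beta> / \<beta>"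
    using c1 c2 b by (intro add_mono divide_right_mono mult_left_mono) auto
  also have "\<dots> = Cb \<beta> * \<bar>\<xi>\<bar> powr \<beta>"
    by (simp add: Cb_def a_def powr_mult field_simps)
  finally show ?thesis .
qed


lemma sum_infsum_swap:
  fixes F :: "'n \<Rightarrow> 'k \<Rightarrow> real"
  assumes "finite N" "\<And>n. n \<in> N \<Longrightarrow> F n summable_on UNIV"
  shows "(\<Sum>n\<in>N. \<Sum>\<^sub>\<infinity>k. F n k) = (\<Sum>\<^sub>\<infinity>k. \<Sum>n\<in>N. F n k)"
    and "(\<lambda>k. \<Sum>n\<in>N. F n k) summable_on UNIV"
  using assms
proof (induction N rule: finite_induct)
  case empty
  { case 1 show ?case by simp }
  { case 2 show ?case by simp }
next
  case (insert x N)
  { case 1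
    have s: "(\<lambda>k. \<Sum>n\<in>N. F n k) summable_on UNIV" using insert.IH(2) 1 by blast
    have "(\<Sum>n\<in>insert x N. \<Sum>\<^sub>\<infinity>k. F n k) = (\<Sum>\<^sub>\<infinity>k. F x k) + (\<Sum>\<^sub>\<infinity>k. \<Sum>n\<in>N. F n k)"
      using insert 1 by simp
    also have "\<dots> = (\<Sum>\<^sub>\<infinity>k. F x k + (\<Sum>n\<in>N. F n k))"
      by (rule infsum_add[symmetric]) (use 1 s in auto)
    finally show ?case using insert by simp }
  { case 2
    have s: "(\<lambda>k. \<Sum>n\<in>N. F n k) summable_on UNIV" using insert.IH(2) 2 by blast
    have "(\<lambda>k. F x k + (\<Sum>n\<in>N. F n k)) summable_on UNIV"
      by (rule summable_on_add) (use 2 s in auto)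
    then show ?case using insert by simp }
qed

lemma shift_bij: "bij_betw (\<lambda>k::int. n - k) UNIV UNIV"
  by (rule bij_betwI[where g = "\<lambda>k. n - k"]) auto

lemma shift_summable:
  fixes \<gamma> :: "int \<Rightarrow> real"
  shows "\<gamma> summable_on UNIV \<Longrightarrow> (\<lambda>k. \<gamma> (n - k)) summable_on UNIV"
    and "(\<Sum>\<^sub>\<infinity>k. \<gamma> (n - k)) = (\<Sum>\<^sub>\<infinity>k. \<gamma> k)"
  using summable_on_reindex_bij_betw[OF shift_bij[of n], of \<gamma>] infsum_reindex_bij_betw[OF shift_bij[of n], of \<gamma>]
  by auto

lemma elem_le_infsum:
  fixes \<gamma> :: "int \<Rightarrow> real"
  assumes "\<gamma> summable_on UNIV" "\<And>k. \<gamma> k \<ge> 0"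
  shows "\<gamma> j \<le> (\<Sum>\<^sub>\<infinity>k. \<gamma> k)"
  using finite_sum_le_infsum[OF assms(1), of "{j}"] assms(2) by simp

lemma conv_cs:
  fixes A \<gamma> :: "int \<Rightarrow> real"
  assumes A0: "\<And>k. A k \<ge> 0" and g0: "\<And>k. \<gamma> k \<ge> 0"
    and sA: "(\<lambda>k. (A k)\<^sup>2) summable_on UNIV" and sg: "\<gamma> summable_on UNIV"
  shows "(\<lambda>k. (A k)\<^sup>2 * \<gamma> (n - k)) summable_on UNIV"
    and "(\<lambda>k. A k * \<gamma> (n - k)) summable_on UNIV"
    and "(\<Sum>\<^sub>\<infinity>k. A k * \<gamma> (n - k))\<^sup>2 \<le> (\<Sum>\<^sub>\<infinity>k. \<gamma> k) * (\<Sum>\<^sub>\<infinity>k. (A k)\<^sup>2 * \<gamma> (n - k))"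
proof -
  define G where "G = (\<Sum>\<^sub>\<infinity>k. \<gamma> k)"
  have gG: "\<gamma> j \<le> G" for j unfolding G_def by (rule elem_le_infsum[OF sg g0])
  show s1: "(\<lambda>k. (A k)\<^sup>2 * \<gamma> (n - k)) summable_on UNIV"
  proof (rule summable_on_comparison_test)
    show "(\<lambda>k. G * (A k)\<^sup>2) summable_on UNIV" by (rule summable_on_cmult_right[OF sA])
    show "(A k)\<^sup>2 * \<gamma> (n - k) \<le> G * (A k)\<^sup>2" for k
      using mult_left_mono[OF gG[of "n - k"], of "(A k)\<^sup>2"] by (simp add: mult.commute)
  qed (auto simp: g0)
  define x where "x k = A k * sqrt (\<gamma> (n - k))" for k
  define y where "y k = sqrt (\<gamma> (n - k))" for k
  have x2: "(x k)\<^sup>2 = (A k)\<^sup>2 * \<gamma> (n - k)" for k by (simp add: x_def power_mult_distrib g0)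
  have y2: "(y k)\<^sup>2 = \<gamma> (n - k)" for k by (simp add: y_def g0)
  have xy: "\<bar>x k\<bar> * \<bar>y k\<bar> = A k * \<gamma> (n - k)" for k by (simp add: x_def y_def A0 g0 abs_mult mult.assoc)
  have sx: "(\<lambda>k. (x k)\<^sup>2) summable_on UNIV" using s1 by (simp add: x2)
  have sy: "(\<lambda>k. (y k)\<^sup>2) summable_on UNIV" using shift_summable(1)[OF sg] by (simp add: y2)
  from cs_infsum(1)[OF sx sy] show "(\<lambda>k. A k * \<gamma> (n - k)) summable_on UNIV"
    unfolding xy .
  from cs_infsum(2)[OF sx sy] have le: "(\<Sum>\<^sub>\<infinity>k. A k * \<gamma> (n - k)) \<le> sqrt (\<Sum>\<^sub>\<infinity>k. (A k)\<^sup>2 * \<gamma> (n - k)) * sqrt (\<Sum>\<^sub>\<infinity>k. \<gamma> (n - k))"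
    unfolding xy x2 y2 .
  have nn: "0 \<le> (\<Sum>\<^sub>\<infinity>k. A k * \<gamma> (n - k))" by (rule infsum_nonneg) (simp add: A0 g0)
  have "(\<Sum>\<^sub>\<infinity>k. A k * \<gamma> (n - k))\<^sup>2 \<le> (sqrt (\<Sum>\<^sub>\<infinity>k. (A k)\<^sup>2 * \<gamma> (n - k)) * sqrt (\<Sum>\<^sub>\<infinity>k. \<gamma> (n - k)))\<^sup>2"
    using le nn by (rule power_mono)
  also have "\<dots> = (\<Sum>\<^sub>\<infinity>k. (A k)\<^sup>2 * \<gamma> (n - k)) * (\<Sum>\<^sub>\<infinity>k. \<gamma> (n - k))"
    by (simp add: power_mult_distrib infsum_nonneg g0 A0)
  finally show "(\<Sum>\<^sub>\<infinity>k. A k * \<gamma> (n - k))\<^sup>2 \<le> (\<Sum>\<^sub>\<infinity>k. \<gamma> k) * (\<Sum>\<^sub>\<infinity>k. (A k)\<^sup>2 * \<gamma> (n - k))"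
    by (simp add: shift_summable(2) mult.commute)
qed

lemma conv_l2:
  fixes A \<gamma> :: "int \<Rightarrow> real"
  assumes A0: "\<And>k. A k \<ge> 0" and g0: "\<And>k. \<gamma> k \<ge> 0"
    and sA: "(\<lambda>k. (A k)\<^sup>2) summable_on UNIV" and sg: "\<gamma> summable_on UNIV"
    and N: "finite N"
  shows "(\<Sum>n\<in>N. (\<Sum>\<^sub>\<infinity>k. A k * \<gamma> (n - k))\<^sup>2) \<le> (\<Sum>\<^sub>\<infinity>k. \<gamma> k)\<^sup>2 * (\<Sum>\<^sub>\<infinity>k. (A k)\<^sup>2)"
proof -
  define G where "G = (\<Sum>\<^sub>\<infinity>k. \<gamma> k)"
  have G0: "G \<ge> 0" unfolding G_def by (rule infsum_nonneg) (simp add: g0)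
  note cs = conv_cs[OF A0 g0 sA sg]
  have "(\<Sum>n\<in>N. (\<Sum>\<^sub>\<infinity>k. A k * \<gamma> (n - k))\<^sup>2) \<le> (\<Sum>n\<in>N. G * (\<Sum>\<^sub>\<infinity>k. (A k)\<^sup>2 * \<gamma> (n - k)))"
    by (rule sum_mono) (use cs(3) in \<open>simp add: G_def\<close>)
  also have "\<dots> = G * (\<Sum>n\<in>N. \<Sum>\<^sub>\<infinity>k. (A k)\<^sup>2 * \<gamma> (n - k))" by (simp add: sum_distrib_left)
  also have "(\<Sum>n\<in>N. \<Sum>\<^sub>\<infinity>k. (A k)\<^sup>2 * \<gamma> (n - k)) = (\<Sum>\<^sub>\<infinity>k. \<Sum>n\<in>N. (A k)\<^sup>2 * \<gamma> (n - k))"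
    by (rule sum_infsum_swap(1)[OF N cs(1)])
  also have "\<dots> \<le> (\<Sum>\<^sub>\<infinity>k. (A k)\<^sup>2 * G)"
  proof (rule infsum_mono)
    show "(\<lambda>k. \<Sum>n\<in>N. (A k)\<^sup>2 * \<gamma> (n - k)) summable_on UNIV" by (rule sum_infsum_swap(2)[OF N cs(1)])
    show "(\<lambda>k. (A k)\<^sup>2 * G) summable_on UNIV" by (rule summable_on_cmult_left[OF sA])
    fix k
    have "(\<Sum>n\<in>N. \<gamma> (n - k)) = (\<Sum>j\<in>(\<lambda>n. n - k) ` N. \<gamma> j)"
      by (subst sum.reindex) (auto simp: inj_on_def)
    also have "\<dots> \<le> G" unfolding G_def by (rule finite_sum_le_infsum[OF sg]) (use N g0 in auto)
    finally have "(\<Sum>n\<in>N. \<gamma> (n - k)) \<le> G" .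
    then show "(\<Sum>n\<in>N. (A k)\<^sup>2 * \<gamma> (n - k)) \<le> (A k)\<^sup>2 * G"
      by (simp add: sum_distrib_left[symmetric] mult_left_mono)
  qed
  also have "\<dots> = (\<Sum>\<^sub>\<infinity>k. (A k)\<^sup>2) * G" by (rule infsum_cmult_left') 
  finally have "(\<Sum>n\<in>N. (\<Sum>\<^sub>\<infinity>k. A k * \<gamma> (n - k))\<^sup>2) \<le> G * ((\<Sum>\<^sub>\<infinity>k. (A k)\<^sup>2) * G)"
    using G0 by (simp add: mult_left_mono)
  then show ?thesis by (simp add: G_def power2_eq_square mult_ac)
qed


lemma wt_sq: "(wt (r/2) k)\<^sup>2 = wt r k"
proof -
  have "(wt (r/2) k)\<^sup>2 = wt (r/2) k * wt (r/2) k" by (simp add: power2_eq_square)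
  also have "\<dots> = wt (r/2 + r/2) k" by (simp only: wt_add)
  finally show ?thesis by simp
qed

lemma weight_ineq:
  fixes m \<beta> :: real and k l :: int
  assumes m: "m \<ge> 0" and b: "\<beta> \<ge> 0"
  shows "wt (m/2) (k + l) * (\<bar>of_int k\<bar> + \<bar>of_int l\<bar>) powr \<beta>
         \<le> 2 powr (m + \<beta>) * (wt ((m + \<beta>)/2) k + wt ((m + \<beta>)/2) l)"
proof -
  define x where "x = real_of_int k"
  define y where "y = real_of_int l"
  define Mx where "Mx = max (1 + x\<^sup>2) (1 + y\<^sup>2)"
  have Mxx: "1 + x\<^sup>2 \<le> Mx" and Mxy: "1 + y\<^sup>2 \<le> Mx" unfolding Mx_def by auto
  have Mx1: "Mx \<ge> 1" using Mxx by (smt (verit) zero_le_power2)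
  have sq: "(x + y)\<^sup>2 \<le> 2 * x\<^sup>2 + 2 * y\<^sup>2"
  proof -
    have "0 \<le> (x - y)\<^sup>2" by simp
    then show ?thesis by (simp add: power2_sum power2_diff)
  qed
  have h1: "1 + (x + y)\<^sup>2 \<le> 4 * Mx" using sq Mxx Mxy by linarith
  have sq2: "(\<bar>x\<bar> + \<bar>y\<bar>)\<^sup>2 \<le> 2 * x\<^sup>2 + 2 * y\<^sup>2"
  proof -
    have "0 \<le> (\<bar>x\<bar> - \<bar>y\<bar>)\<^sup>2" by simp
    then show ?thesis by (simp add: power2_sum power2_diff)
  qed
  have h2: "(\<bar>x\<bar> + \<bar>y\<bar>)\<^sup>2 \<le> 4 * Mx" using sq2 Mxx Mxy by linarith
  have "wt (m/2) (k + l) = (1 + (x + y)\<^sup>2) powr (m/2)" by (simp add: wt_def x_def y_def)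
  also have "\<dots> \<le> (4 * Mx) powr (m/2)" using h1 m by (intro powr_mono2) auto
  finally have w1: "wt (m/2) (k + l) \<le> (4 * Mx) powr (m/2)" .
  have "(\<bar>of_int k\<bar> + \<bar>of_int l\<bar>) powr \<beta> = ((\<bar>x\<bar> + \<bar>y\<bar>)\<^sup>2) powr (\<beta>/2)"
  proof -
    have e2: "(\<bar>x\<bar> + \<bar>y\<bar>)\<^sup>2 = (\<bar>x\<bar> + \<bar>y\<bar>) powr 2"
    proof (cases "\<bar>x\<bar> + \<bar>y\<bar> = 0")
      case True then show ?thesis by simp
    next
      case False
      then have "\<bar>x\<bar> + \<bar>y\<bar> > 0" by (metis abs_ge_zero add_nonneg_nonneg less_eq_real_def)
      from powr_realpow[OF this, of 2] show ?thesis by simp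
    qed
    have "((\<bar>x\<bar> + \<bar>y\<bar>)\<^sup>2) powr (\<beta>/2) = ((\<bar>x\<bar> + \<bar>y\<bar>) powr 2) powr (\<beta>/2)"
      by (simp only: e2)
    also have "\<dots> = (\<bar>x\<bar> + \<bar>y\<bar>) powr \<beta>" by (simp only: powr_powr) simp
    finally show ?thesis by (simp add: x_def y_def)
  qed
  also have "\<dots> \<le> (4 * Mx) powr (\<beta>/2)" using h2 b by (intro powr_mono2) auto
  finally have w2: "(\<bar>of_int k\<bar> + \<bar>of_int l\<bar>) powr \<beta> \<le> (4 * Mx) powr (\<beta>/2)" .
  have "wt (m/2) (k + l) * (\<bar>of_int k\<bar> + \<bar>of_int l\<bar>) powr \<beta> \<le> (4 * Mx) powr (m/2) * (4 * Mx) powr (\<beta>/2)"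
    by (intro mult_mono w1 w2) auto
  also have "\<dots> = (4 * Mx) powr ((m + \<beta>)/2)" by (simp add: powr_add[symmetric] add_divide_distrib)
  also have "\<dots> = 4 powr ((m + \<beta>)/2) * Mx powr ((m + \<beta>)/2)" using Mx1 by (simp add: powr_mult)
  also have "4 powr ((m + \<beta>)/2) = 2 powr (m + \<beta>)"
  proof -
    have "(4::real) = 2 powr 2" by simp
    then have "(4::real) powr ((m + \<beta>)/2) = 2 powr (2 * ((m + \<beta>)/2))" by (simp only: powr_powr)
    moreover have "2 * ((m + \<beta>)/2) = m + \<beta>" by simp
    ultimately show ?thesis by simp
  qed
  also have "Mx powr ((m + \<beta>)/2) \<le> wt ((m + \<beta>)/2) k + wt ((m + \<beta>)/2) l"
    by (auto simp: Mx_def wt_def x_def y_def max_def)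
  finally show ?thesis by (simp add: mult_left_mono)
qed


lemma pointwise_H:
  assumes m: "m > 1/2" and b: "0 < \<beta>" "\<beta> < 1"
    and e: "0 < \<epsilon>" "\<epsilon> \<le> 1/2" and s12: "s1 \<in> {0..1}" "s2 \<in> {0..1}"
    and sf: "smooth_fun f" and pf: "periodic1 f" and sg: "smooth_fun g" and pg: "periodic1 g"
  defines "\<alpha> \<equiv> \<lambda>k. cmod (fourier_coeff f k)" and "\<gamma> \<equiv> \<lambda>k. cmod (fourier_coeff g k)"
  defines "A \<equiv> \<lambda>k. wt ((m + \<beta>)/2) k * \<alpha> k" and "B \<equiv> \<lambda>k. wt ((m + \<beta>)/2) k * \<gamma> k"
  shows "wt (m/2) n * cmod (fourier_coeff (Hop \<epsilon> s1 s2 \<beta> f g) n)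
     \<le> (Cb \<beta> * 2 powr (m + \<beta>)) * ((\<Sum>\<^sub>\<infinity>k. A k * \<gamma> (n - k)) + (\<Sum>\<^sub>\<infinity>k. \<alpha> k * B (n - k)))"
proof -
  let ?s = "m + \<beta>"
  define c0 where "c0 = Cb \<beta> * 2 powr ?s"
  have Cb0: "Cb \<beta> \<ge> 0" using b by (simp add: Cb_def)
  have c00: "c0 \<ge> 0" using Cb0 by (simp add: c0_def)
  define t where "t k = fourier_coeff f k * fourier_coeff g (n - k) * mu \<epsilon> \<beta> (of_int k * s1 + of_int (n - k) * s2)" for k
  have ht: "(t has_sum fourier_coeff (Hop \<epsilon> s1 s2 \<beta> f g) n) UNIV"
    unfolding t_def by (rule Hop_fc[OF e _ sf pf sg pg]) (use b in auto)
  have a0: "\<alpha> k \<ge> 0" "\<gamma> k \<ge> 0" for k by (auto simp: \<alpha>_def \<gamma>_def)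
  have sa: "\<alpha> summable_on UNIV" unfolding \<alpha>_def by (rule smooth_l1[OF sf pf])
  have sg1: "\<gamma> summable_on UNIV" unfolding \<gamma>_def by (rule smooth_l1[OF sg pg])
  have sA: "(\<lambda>k. (A k)\<^sup>2) summable_on UNIV"
    using smooth_summable[OF sf pf, of ?s] by (simp add: A_def \<alpha>_def power_mult_distrib wt_sq)
  have sB: "(\<lambda>k. (B k)\<^sup>2) summable_on UNIV"
    using smooth_summable[OF sg pg, of ?s] by (simp add: B_def \<gamma>_def power_mult_distrib wt_sq)
  have A0: "A k \<ge> 0" "B k \<ge> 0" for k by (auto simp: A_def B_def a0)
  have R1: "(\<lambda>k. A k * \<gamma> (n - k)) summable_on UNIV" by (rule conv_cs(2)[OF _ _ sA sg1]) (auto simp: A0 a0)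
  have R2: "(\<lambda>k. \<alpha> k * B (n - k)) summable_on UNIV"
  proof -
    have "(\<lambda>k. B k * \<alpha> (n - k)) summable_on UNIV" by (rule conv_cs(2)[OF _ _ sB sa]) (auto simp: A0 a0)
    then have "(\<lambda>k. B (n - k) * \<alpha> (n - (n - k))) summable_on UNIV"
      using summable_on_reindex_bij_betw[OF shift_bij[of n], of "\<lambda>k. B k * \<alpha> (n - k)"] by simp
    then show ?thesis by (simp add: mult.commute)
  qed
  define R where "R k = c0 * (A k * \<gamma> (n - k) + \<alpha> k * B (n - k))" for k
  have sR: "R summable_on UNIV" unfolding R_def by (intro summable_on_cmult_right summable_on_add R1 R2)
  have tb: "wt (m/2) n * cmod (t k) \<le> R k" for k
  proof -
    have xi: "\<bar>of_int k * s1 + of_int (n - k) * s2\<bar> \<le> \<bar>of_int k\<bar> + \<bar>of_int (n - k)\<bar>"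
    proof -
      have "\<bar>of_int k * s1\<bar> \<le> \<bar>of_int k\<bar>" using s12 by (auto simp: abs_mult mult_left_le)
      moreover have "\<bar>of_int (n - k) * s2\<bar> \<le> \<bar>of_int (n - k)\<bar>" using s12 by (auto simp: abs_mult mult_left_le)
      ultimately show ?thesis by (smt (verit))
    qed
    have "cmod (mu \<epsilon> \<beta> (of_int k * s1 + of_int (n - k) * s2)) \<le> Cb \<beta> * \<bar>of_int k * s1 + of_int (n - k) * s2\<bar> powr \<beta>"
      by (rule mu_bound2[OF e b])
    also have "\<dots> \<le> Cb \<beta> * (\<bar>of_int k\<bar> + \<bar>of_int (n - k)\<bar>) powr \<beta>"
      using xi b Cb0 by (intro mult_left_mono powr_mono2) auto
    finally have mb: "cmod (mu \<epsilon> \<beta> (of_int k * s1 + of_int (n - k) * s2)) \<le> Cb \<beta> * (\<bar>of_int k\<bar> + \<bar>of_int (n - k)\<bar>) powr \<beta>" .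
    have wi: "wt (m/2) (k + (n - k)) * (\<bar>of_int k\<bar> + \<bar>of_int (n - k)\<bar>) powr \<beta>
         \<le> 2 powr ?s * (wt (?s/2) k + wt (?s/2) (n - k))"
      by (rule weight_ineq) (use m b in auto)
    have "wt (m/2) n * cmod (t k) = (\<alpha> k * \<gamma> (n - k)) * (wt (m/2) n * cmod (mu \<epsilon> \<beta> (of_int k * s1 + of_int (n - k) * s2)))"
      by (simp add: t_def norm_mult \<alpha>_def \<gamma>_def mult_ac)
    also have "\<dots> \<le> (\<alpha> k * \<gamma> (n - k)) * (wt (m/2) n * (Cb \<beta> * (\<bar>of_int k\<bar> + \<bar>of_int (n - k)\<bar>) powr \<beta>))"
      using mb a0 by (intro mult_left_mono) auto
    also have "\<dots> = (\<alpha> k * \<gamma> (n - k) * Cb \<beta>) * (wt (m/2) (k + (n - k)) * (\<bar>of_int k\<bar> + \<bar>of_int (n - k)\<bar>) powr \<beta>)"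
      by (simp add: mult_ac)
    also have "\<dots> \<le> (\<alpha> k * \<gamma> (n - k) * Cb \<beta>) * (2 powr ?s * (wt (?s/2) k + wt (?s/2) (n - k)))"
      using wi a0 Cb0 by (intro mult_left_mono) auto
    also have "\<dots> = R k"
      by (simp add: R_def c0_def A_def B_def algebra_simps)
    finally show ?thesis .
  qed
  have wpos: "wt (m/2) n > 0" by simp
  have sT: "(\<lambda>k. wt (m/2) n * cmod (t k)) summable_on UNIV"
    by (rule summable_on_comparison_test[OF sR tb]) simp
  have sT': "(\<lambda>k. cmod (t k)) summable_on UNIV"
    using summable_on_cmult_right[OF sT, of "1 / wt (m/2) n"] wpos by (simp add: field_simps)
  have "wt (m/2) n * cmod (fourier_coeff (Hop \<epsilon> s1 s2 \<beta> f g) n) \<le> wt (m/2) n * (\<Sum>\<^sub>\<infinity>k. cmod (t k))"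
    using norm_infsum_bound[OF sT'] infsumI[OF ht] wpos by (simp add: mult_left_mono)
  also have "\<dots> = (\<Sum>\<^sub>\<infinity>k. wt (m/2) n * cmod (t k))" by (simp add: infsum_cmult_right')
  also have "\<dots> \<le> (\<Sum>\<^sub>\<infinity>k. R k)" by (rule infsum_mono[OF sT sR tb])
  also have "\<dots> = c0 * ((\<Sum>\<^sub>\<infinity>k. A k * \<gamma> (n - k)) + (\<Sum>\<^sub>\<infinity>k. \<alpha> k * B (n - k)))"
    unfolding R_def by (simp add: infsum_cmult_right' infsum_add[OF R1 R2])
  finally show ?thesis by (simp add: c0_def)
qed


theorem theorem5p3:
  fixes m \<beta> :: real
  assumes "m > 1/2" and "0 < \<beta>" and "\<beta> < 1"
  shows "\<exists>C::real. \<forall>\<epsilon> s1 s2 (f::real \<Rightarrow> real) (g::real \<Rightarrow> real).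
           0 < \<epsilon> \<and> \<epsilon> \<le> 1/2 \<and> s1 \<in> {0..1} \<and> s2 \<in> {0..1} \<and>
           periodic1 f \<and> smooth_fun f \<and> periodic1 g \<and> smooth_fun g \<longrightarrow>
           sobolev_norm m (Hop \<epsilon> s1 s2 \<beta> f g)
             \<le> C * sobolev_norm (m + \<beta>) f * sobolev_norm (m + \<beta>) g"
proof -
  note m = assms(1) and b = assms(2,3)
  let ?s = "m + \<beta>"
  define Z where "Z = (\<Sum>\<^sub>\<infinity>k. wt (- ?s) k)"
  define c0 where "c0 = Cb \<beta> * 2 powr ?s"
  have Z0: "Z \<ge> 0" unfolding Z_def by (rule infsum_nonneg) simp
  have c00: "c0 \<ge> 0" using b by (simp add: c0_def Cb_def)
  show ?thesis
  proof (intro exI[of _ "2 * c0 * sqrt Z"] allI impI, elim conjE)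
    fix \<epsilon> s1 s2 :: real and f g :: "real \<Rightarrow> real"
    assume e: "0 < \<epsilon>" "\<epsilon> \<le> 1/2" and s12: "s1 \<in> {0..1}" "s2 \<in> {0..1}"
      and pf: "periodic1 f" and sf: "smooth_fun f" and pg: "periodic1 g" and sg: "smooth_fun g"
    define \<alpha> where "\<alpha> = (\<lambda>k. cmod (fourier_coeff f k))"
    define \<gamma> where "\<gamma> = (\<lambda>k. cmod (fourier_coeff g k))"
    define A where "A = (\<lambda>k. wt (?s/2) k * \<alpha> k)"
    define B where "B = (\<lambda>k. wt (?s/2) k * \<gamma> k)"
    define X where "X n = (\<Sum>\<^sub>\<infinity>k. A k * \<gamma> (n - k))" for n
    define Y where "Y n = (\<Sum>\<^sub>\<infinity>k. \<alpha> k * B (n - k))" for n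
    define Hc where "Hc n = cmod (fourier_coeff (Hop \<epsilon> s1 s2 \<beta> f g) n)" for n
    define Sf where "Sf = (\<Sum>\<^sub>\<infinity>k. wt ?s k * (\<alpha> k)\<^sup>2)"
    define Sg where "Sg = (\<Sum>\<^sub>\<infinity>k. wt ?s k * (\<gamma> k)\<^sup>2)"
    have a0: "\<alpha> k \<ge> 0" "\<gamma> k \<ge> 0" for k by (auto simp: \<alpha>_def \<gamma>_def)
    have A0: "A k \<ge> 0" "B k \<ge> 0" for k by (auto simp: A_def B_def a0)
    have sa: "\<alpha> summable_on UNIV" unfolding \<alpha>_def by (rule smooth_l1[OF sf pf])
    have sg1: "\<gamma> summable_on UNIV" unfolding \<gamma>_def by (rule smooth_l1[OF sg pg])
    have A2: "(A k)\<^sup>2 = wt ?s k * (\<alpha> k)\<^sup>2" for k by (simp add: A_def power_mult_distrib wt_sq)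
    have B2: "(B k)\<^sup>2 = wt ?s k * (\<gamma> k)\<^sup>2" for k by (simp add: B_def power_mult_distrib wt_sq)
    have ssf: "(\<lambda>k. wt ?s k * (\<alpha> k)\<^sup>2) summable_on UNIV" unfolding \<alpha>_def by (rule smooth_summable[OF sf pf])
    have ssg: "(\<lambda>k. wt ?s k * (\<gamma> k)\<^sup>2) summable_on UNIV" unfolding \<gamma>_def by (rule smooth_summable[OF sg pg])
    have sA: "(\<lambda>k. (A k)\<^sup>2) summable_on UNIV" using ssf by (simp add: A2)
    have sB: "(\<lambda>k. (B k)\<^sup>2) summable_on UNIV" using ssg by (simp add: B2)
    have Sf0: "Sf \<ge> 0" unfolding Sf_def by (rule infsum_nonneg) simp
    have Sg0: "Sg \<ge> 0" unfolding Sg_def by (rule infsum_nonneg) simp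
    have s_half: "?s > 1/2" using m b by simp
    have F1: "(\<Sum>\<^sub>\<infinity>k. \<alpha> k)\<^sup>2 \<le> Z * Sf"
    proof -
      have "(\<Sum>\<^sub>\<infinity>k. \<bar>\<alpha> k\<bar>) \<le> sqrt Z * sqrt Sf"
        using l1_bound(2)[OF s_half ssf] by (simp add: Z_def Sf_def)
      moreover have "0 \<le> (\<Sum>\<^sub>\<infinity>k. \<alpha> k)" by (rule infsum_nonneg) (simp add: a0)
      ultimately have "(\<Sum>\<^sub>\<infinity>k. \<alpha> k)\<^sup>2 \<le> (sqrt Z * sqrt Sf)\<^sup>2" using a0 by (intro power_mono) auto
      then show ?thesis using Z0 Sf0 by (simp add: power_mult_distrib)
    qed
    have G1: "(\<Sum>\<^sub>\<infinity>k. \<gamma> k)\<^sup>2 \<le> Z * Sg"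
    proof -
      have "(\<Sum>\<^sub>\<infinity>k. \<bar>\<gamma> k\<bar>) \<le> sqrt Z * sqrt Sg"
        using l1_bound(2)[OF s_half ssg] by (simp add: Z_def Sg_def)
      moreover have "0 \<le> (\<Sum>\<^sub>\<infinity>k. \<gamma> k)" by (rule infsum_nonneg) (simp add: a0)
      ultimately have "(\<Sum>\<^sub>\<infinity>k. \<gamma> k)\<^sup>2 \<le> (sqrt Z * sqrt Sg)\<^sup>2" using a0 by (intro power_mono) auto
      then show ?thesis using Z0 Sg0 by (simp add: power_mult_distrib)
    qed
    have Yalt: "Y n = (\<Sum>\<^sub>\<infinity>k. B k * \<alpha> (n - k))" for n
    proof -
      have "(\<Sum>\<^sub>\<infinity>k. B k * \<alpha> (n - k)) = (\<Sum>\<^sub>\<infinity>k. B (n - k) * \<alpha> (n - (n - k)))"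
        using infsum_reindex_bij_betw[OF shift_bij[of n], of "\<lambda>k. B k * \<alpha> (n - k)"] by simp
      then show ?thesis by (simp add: Y_def mult.commute)
    qed
    have X0: "X n \<ge> 0" "Y n \<ge> 0" for n unfolding X_def Y_def by (auto intro!: infsum_nonneg simp: A0 a0)
    have pw: "wt (m/2) n * Hc n \<le> c0 * (X n + Y n)" for n
      using pointwise_H[OF m b e s12 sf pf sg pg, of n] by (simp add: Hc_def c0_def X_def Y_def A_def B_def \<alpha>_def \<gamma>_def)
    define T where "T n = (1 + (real_of_int n)\<^sup>2) powr m * (Hc n)\<^sup>2" for n
    have T0: "T n \<ge> 0" for n by (simp add: T_def)
    have Tb: "T n \<le> 2 * c0\<^sup>2 * ((X n)\<^sup>2 + (Y n)\<^sup>2)" for n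
    proof -
      have "T n = (wt (m/2) n * Hc n)\<^sup>2" by (simp add: T_def power_mult_distrib wt_sq) (simp add: wt_def)
      also have "\<dots> \<le> (c0 * (X n + Y n))\<^sup>2" using pw[of n] by (intro power_mono) (auto simp: Hc_def)
      also have "\<dots> = c0\<^sup>2 * (X n + Y n)\<^sup>2" by (simp add: power_mult_distrib)
      also have "(X n + Y n)\<^sup>2 \<le> 2 * ((X n)\<^sup>2 + (Y n)\<^sup>2)"
      proof -
        have "0 \<le> (X n - Y n)\<^sup>2" by simp
        then show ?thesis by (simp add: power2_sum power2_diff)
      qed
      then have "c0\<^sup>2 * (X n + Y n)\<^sup>2 \<le> c0\<^sup>2 * (2 * ((X n)\<^sup>2 + (Y n)\<^sup>2))" by (rule mult_left_mono) simp
      finally show ?thesis by (simp add: algebra_simps)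
    qed
    define Bd where "Bd = 4 * c0\<^sup>2 * Z * Sf * Sg"
    have fin: "(\<Sum>n\<in>N. T n) \<le> Bd" if N: "finite N" for N
    proof -
      have "(\<Sum>n\<in>N. T n) \<le> (\<Sum>n\<in>N. 2 * c0\<^sup>2 * ((X n)\<^sup>2 + (Y n)\<^sup>2))" by (rule sum_mono[OF Tb])
      also have "\<dots> = 2 * c0\<^sup>2 * ((\<Sum>n\<in>N. (X n)\<^sup>2) + (\<Sum>n\<in>N. (Y n)\<^sup>2))"
        by (simp add: sum_distrib_left[symmetric] sum.distrib)
      also have "(\<Sum>n\<in>N. (X n)\<^sup>2) \<le> (\<Sum>\<^sub>\<infinity>k. \<gamma> k)\<^sup>2 * (\<Sum>\<^sub>\<infinity>k. (A k)\<^sup>2)"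
        unfolding X_def by (rule conv_l2[OF _ _ sA sg1 N]) (auto simp: A0 a0)
      also have "(\<Sum>n\<in>N. (Y n)\<^sup>2) \<le> (\<Sum>\<^sub>\<infinity>k. \<alpha> k)\<^sup>2 * (\<Sum>\<^sub>\<infinity>k. (B k)\<^sup>2)"
        unfolding Yalt by (rule conv_l2[OF _ _ sB sa N]) (auto simp: A0 a0)
      also have "(\<Sum>\<^sub>\<infinity>k. (A k)\<^sup>2) = Sf" by (simp add: Sf_def A2)
      also have "(\<Sum>\<^sub>\<infinity>k. (B k)\<^sup>2) = Sg" by (simp add: Sg_def B2)
      finally have "(\<Sum>n\<in>N. T n) \<le> 2 * c0\<^sup>2 * ((\<Sum>\<^sub>\<infinity>k. \<gamma> k)\<^sup>2 * Sf + (\<Sum>\<^sub>\<infinity>k. \<alpha> k)\<^sup>2 * Sg)"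
        by (simp add: mult_left_mono)
      also have "\<dots> \<le> 2 * c0\<^sup>2 * ((Z * Sg) * Sf + (Z * Sf) * Sg)"
        using F1 G1 Sf0 Sg0 by (intro mult_left_mono add_mono mult_right_mono) auto
      also have "\<dots> = Bd" by (simp add: Bd_def algebra_simps)
      finally show ?thesis .
    qed
    have sT: "T summable_on UNIV"
      by (rule nonneg_bdd_above_summable_on) (auto intro!: bdd_aboveI2 fin T0)
    have "(\<Sum>\<^sub>\<infinity>n. T n) \<le> Bd" by (rule infsum_le_finite_sums[OF sT fin]) auto
    then have "sobolev_norm m (Hop \<epsilon> s1 s2 \<beta> f g) \<le> sqrt Bd"
      by (simp add: sobolev_norm_def T_def Hc_def)
    also have "sqrt Bd = 2 * c0 * sqrt Z * sqrt Sf * sqrt Sg"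
      using c00 by (simp add: Bd_def real_sqrt_mult)
    also have "sqrt Sf = sobolev_norm ?s f" by (simp add: sobolev_norm_def Sf_def wt_def \<alpha>_def)
    also have "sqrt Sg = sobolev_norm ?s g" by (simp add: sobolev_norm_def Sg_def wt_def \<gamma>_def)
    finally show "sobolev_norm m (Hop \<epsilon> s1 s2 \<beta> f g) \<le> 2 * c0 * sqrt Z * sobolev_norm ?s f * sobolev_norm ?s g" .
  qed
qed


end
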